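(* Let $s\ge 1$, $m=\lfloor (s+1)/2\rfloor$, let $A=(a_{ij})$ be a real $s\times s$ matrix and $b\in\mathbb{R}^s$ with $b_i>0$ for all $i$, satisfying (i) $b_i a_{ij}+b_j a_{ji}-b_ib_j=0$ for $1\le i,j\le s$, and (ii) $b_{s+1-i}=b_i$ for $1\le i\le s$ and $b_j=a_{s+1-i,s+1-j}+a_{ij}$ for $1\le i,j\le s$. Let $B=\mathrm{diag}(b_1,\dots,b_s)$, $e_s=(1,\dots,1)^T\in\mathbb{R}^s$, and $\bar A=(\bar a_{ij})$ with $\bar a_{ij}=a_{ij}-b_j/2$. Let $P=(P_1\ P_2)$ be the orthogonal $s\times s$ matrix, with $P_1$ of size $s\times m$ and $P_2$ of size $s\times(s-m)$, such that for $x\in\mathbb{R}^s$, $P_1^Tx=(y_1,\dots,y_m)^T$ and $P_2^Tx=(y_{m+1},\dots,y_s)^T$, where $y_i=\tfrac{\sqrt2}{2}(x_{s+1-i}+x_i)$ for $1\le i\le\lfloor s/2\rfloor$, $y_m=x_m$ if $s$ is odd, and $y_i=\tfrac{\sqrt2}{2}(x_{s+1-i}-x_i)$ for $m+1\le i\le s$. Let $K=P_1^TB^{1/2}\bar AB^{-1/2}P_2\in\mathbb{R}^{m\times(s-m)}$ and let $K=UDV^T$ be a singular value decomposition, with $U\in\mathbb{R}^{m\times m}$, $V\in\mathbb{R}^{(s-m)\times(s-m)}$ orthogonal and $D\in\mathbb{R}^{m\times(s-m)}$ having diagonal entries $D_{ii}=\sigma_i\ge0$ ($1\le i\le s-m$)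 and zeros elsewhere; if $s$ is odd set $\sigma_m=0$. Let $Q_1=B^{-1/2}P_1U$, $Q_2=B^{-1/2}P_2V$, and $(\alpha_1,\dots,\alpha_m)^T=Q_1^TBe_s$. Let $h\in\mathbb{R}$, $J\in\mathbb{R}^{d\times d}$ and $r\in\mathbb{R}^{sd}$. Assume the matrices $I_d+h^2\sigma_i^2J^2$ ($1\le i\le m$) are invertible and that $$M=I_d-J\,\frac h2\sum_{i=1}^m\alpha_i^2\,(I_d+h^2\sigma_i^2J^2)^{-1}$$ is invertible. Define $R=(Q_1^TB\otimes I_d)\,r+h\,(DQ_2^TB\otimes J)\,r\in\mathbb{R}^{md}$ with blocks $R_1,\dots,R_m\in\mathbb{R}^d$; define $\Delta z\in\mathbb{R}^d$ as the solution of $M\,\Delta z=h\,J\sum_{i=1}^m\alpha_i(I_d+h^2\sigma_i^2J^2)^{-1}R_i$; define $W_i=(I_d+h^2\sigma_i^2J^2)^{-1}\big(R_i+\tfrac{\alpha_i}{2}\Delta z\big)$ for $1\le i\le m$ and $W'=(W_1^T,\dots,W_m^T)^T$; define $W''=-h\,(D^T\otimes J)\,W'+(Q_2^TB\otimes I_d)\,r\in\mathbb{R}^{(s-m)d}$; and set $\Delta Y=(Q_1\otimes I_d)W'+(Q_2\otimes I_d)W''$. Then $\Delta Y$ is the unique solution of the linear system $$\left(I_s\otimes I_d-h\,A\otimes J\right)\Delta Y=r .$$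
   Context: $A,b$ are the coefficients of an $s$-stage implicit Runge–Kutta scheme; condition (i) is symplecticity and (ii) is symmetry (e.g. Gauss collocation methods satisfy both). $\otimes$ denotes the Kronecker product, and $B^{\pm1/2}$ denote the diagonal matrices with entries $b_i^{\pm1/2}$. The system $(I_s\otimes I_d-hA\otimes J)\Delta Y=r$ is the simplified linear system arising in simplified Newton iterations for the stage equations. *)

theory Defs
  imports "Jordan_Normal_Form.Matrix"
begin

text \<open>Kronecker product of matrices (row-major block layout:
  block (i,j) of the result is A(i,j) times B).\<close>
definition kron :: "real mat \<Rightarrow> real mat \<Rightarrow> real mat" where
  "kron A B = mat (dim_row A * dim_row B) (dim_col A * dim_col B)
     (\<lambda>(i,j). A $$ (i div dim_row B, j div dim_col B) * B $$ (i mod dim_row B, j mod dim_col B))"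

text \<open>Inverse of a square matrix (meaningful when it is invertible).\<close>
definition minv :: "real mat \<Rightarrow> real mat" where
  "minv M = (SOME N. N \<in> carrier_mat (dim_row M) (dim_row M) \<and>
                      M * N = 1\<^sub>m (dim_row M) \<and> N * M = 1\<^sub>m (dim_row M))"

definition diagm :: "nat \<Rightarrow> (nat \<Rightarrow> real) \<Rightarrow> real mat" where
  "diagm n f = mat n n (\<lambda>(i,j). if i = j then f i else 0)"

text \<open>The transposed matrix P^T of the paper (0-based indices):
  (P^T x)_i = sqrt2/2 (x_(s-1-i) + x_i) for i < s div 2,
  (P^T x)_(m-1) = x_(m-1) if s is odd,
  (P^T x)_i = sqrt2/2 (x_(s-1-i) - x_i) for m \<le> i < s,  where m = (s+1) div 2.\<close>
definition PT_mat :: "nat \<Rightarrow> real mat" where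
  "PT_mat s = mat s s (\<lambda>(i,j).
     if i < s div 2 then sqrt 2 / 2 * ((if j = s - 1 - i then 1 else 0) + (if j = i then 1 else 0))
     else if i < (s + 1) div 2 then (if j = i then 1 else 0)
     else sqrt 2 / 2 * ((if j = s - 1 - i then 1 else 0) - (if j = i then 1 else 0)))"

definition P1_mat :: "nat \<Rightarrow> real mat" where
  "P1_mat s = mat s ((s + 1) div 2) (\<lambda>(i,j). transpose_mat (PT_mat s) $$ (i, j))"

definition P2_mat :: "nat \<Rightarrow> real mat" where
  "P2_mat s = mat s (s - (s + 1) div 2) (\<lambda>(i,j). transpose_mat (PT_mat s) $$ (i, j + (s + 1) div 2))"

definition msum :: "nat \<Rightarrow> nat \<Rightarrow> (nat \<Rightarrow> real mat) \<Rightarrow> nat set \<Rightarrow> real mat" where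
  "msum nr nc F I = mat nr nc (\<lambda>(k,l). \<Sum>i\<in>I. F i $$ (k,l))"

definition vsum :: "nat \<Rightarrow> (nat \<Rightarrow> real vec) \<Rightarrow> nat set \<Rightarrow> real vec" where
  "vsum n F I = vec n (\<lambda>k. \<Sum>i\<in>I. F i $ k)"

definition block_vec :: "nat \<Rightarrow> real vec \<Rightarrow> nat \<Rightarrow> real vec" where
  "block_vec d v i = vec d (\<lambda>k. v $ (i * d + k))"

definition stack_vec :: "nat \<Rightarrow> nat \<Rightarrow> (nat \<Rightarrow> real vec) \<Rightarrow> real vec" where
  "stack_vec m d W = vec (m * d) (\<lambda>p. W (p div d) $ (p mod d))"

end

theory Submission
  imports Defs "Jordan_Normal_Form.Determinant"
begin

definition tom :: "nat \<Rightarrow> nat \<Rightarrow> real vec \<Rightarrow> real mat" where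
  "tom n d v = mat n d (\<lambda>(j,k). v $ (j*d+k))"
definition tov :: "nat \<Rightarrow> nat \<Rightarrow> real mat \<Rightarrow> real vec" where
  "tov n d X = vec (n*d) (\<lambda>p. X $$ (p div d, p mod d))"

lemma tom_carrier[simp]: "tom n d v \<in> carrier_mat n d" by (simp add: tom_def)
lemma tov_carrier[simp]: "tov n d X \<in> carrier_vec (n*d)" by (simp add: tov_def)

lemma sum_split_prod: "(\<Sum>q\<in>{0..<n*d}. f q) = (\<Sum>j\<in>{0..<n}. \<Sum>l\<in>{0..<d}. f (j*d+l::nat)) "
proof (induction n)
  case 0 then show ?case by simp
next
  case (Suc n)
  have "(\<Sum>q\<in>{0..<Suc n*d}. f q) = (\<Sum>q\<in>{0..<n*d}. f q) + (\<Sum>q\<in>{n*d..<n*d+d}. f q)"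
    by (simp add: add.commute sum.atLeastLessThan_concat)
  also have "(\<Sum>q\<in>{n*d..<n*d+d}. f q) = (\<Sum>l\<in>{0..<d}. f (n*d+l))"
  proof -
    have "(\<Sum>q\<in>{0+n*d..<d+n*d}. f q) = (\<Sum>l\<in>{0..<d}. f (l+n*d))" by (rule sum.shift_bounds_nat_ivl)
    then show ?thesis by (simp add: add.commute)
  qed
  finally show ?case using Suc by simp
qed

lemma tov_tom: assumes "v \<in> carrier_vec (n*d)" shows "tov n d (tom n d v) = v"
proof (rule eq_vecI)
  show "dim_vec (tov n d (tom n d v)) = dim_vec v" using assms by (simp add: tov_def)
  fix p assume "p < dim_vec v"
  hence p: "p < n*d" using assms by simp
  hence d: "d > 0" by (cases d) auto
  have "p div d < n" using p by (simp add: less_mult_imp_div_less)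
  then show "tov n d (tom n d v) $ p = v $ p" using p d
    by (simp add: tov_def tom_def)
qed

lemma tom_tov: assumes "X \<in> carrier_mat n d" shows "tom n d (tov n d X) = X"
proof (rule eq_matI)
  fix j k assume "j < dim_row X" "k < dim_col X"
  hence jk: "j < n" "k < d" using assms by auto
  have "j*d+k < n*d"
  proof -
    have "j*d+k < j*d + d" using jk by simp
    also have "\<dots> \<le> n*d" using jk by (metis add.commute mult_Suc le_eq_less_or_eq mult_le_mono1 Suc_le_eq) 
    finally show ?thesis .
  qed
  then show "tom n d (tov n d X) $$ (j, k) = X $$ (j, k)" using jk by (simp add: tom_def tov_def)
qed (use assms in \<open>auto simp: tom_def\<close>)

lemma tov_inj: assumes "X \<in> carrier_mat n d" "Y \<in> carrier_mat n d" "tov n d X = tov n d Y" shows "X = Y"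
  using tom_tov assms by metis

lemma tov_add: assumes "X \<in> carrier_mat n d" "Y \<in> carrier_mat n d"
  shows "tov n d (X + Y) = tov n d X + tov n d Y"
proof (rule eq_vecI)
  fix p assume "p < dim_vec (tov n d X + tov n d Y)"
  hence p: "p < n*d" by (simp add: tov_def)
  hence d: "d > 0" by (cases d) auto
  have "p div d < n" using p by (simp add: less_mult_imp_div_less)
  then show "tov n d (X + Y) $ p = (tov n d X + tov n d Y) $ p" using p d assms by (simp add: tov_def)
qed (simp add: tov_def)

lemma tov_smult: assumes "X \<in> carrier_mat n d" shows "tov n d (a \<cdot>\<^sub>m X) = a \<cdot>\<^sub>v tov n d X"
proof (rule eq_vecI)
  fix p assume "p < dim_vec (a \<cdot>\<^sub>v tov n d X)"
  hence p: "p < n*d" by (simp add: tov_def)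
  hence d: "d > 0" by (cases d) auto
  have "p div d < n" using p by (simp add: less_mult_imp_div_less)
  then show "tov n d (a \<cdot>\<^sub>m X) $ p = (a \<cdot>\<^sub>v tov n d X) $ p" using p d assms by (simp add: tov_def)
qed (simp add: tov_def)

lemma kron_carrier[simp]: "kron A B \<in> carrier_mat (dim_row A * dim_row B) (dim_col A * dim_col B)"
  by (simp add: kron_def)

lemma kron_vec: assumes X: "X \<in> carrier_mat n' n" and Y: "Y \<in> carrier_mat d d" and v: "v \<in> carrier_vec (n*d)"
  shows "kron X Y *\<^sub>v v = tov n' d (X * tom n d v * transpose_mat Y)"
proof (rule eq_vecI)
  show "dim_vec (kron X Y *\<^sub>v v) = dim_vec (tov n' d (X * tom n d v * transpose_mat Y))"
    using X Y by (simp add: kron_def tov_def)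
  fix p assume "p < dim_vec (tov n' d (X * tom n d v * transpose_mat Y))"
  hence p: "p < n'*d" by (simp add: tov_def)
  hence d: "d > 0" by (cases d) auto
  have i: "p div d < n'" using p by (simp add: less_mult_imp_div_less)
  have k: "p mod d < d" using d by simp
  have "(kron X Y *\<^sub>v v) $ p = (\<Sum>q\<in>{0..<n*d}. X $$ (p div d, q div d) * Y $$ (p mod d, q mod d) * v $ q)"
    using X Y v p by (simp add: kron_def mult_mat_vec_def scalar_prod_def)
  also have "\<dots> = (\<Sum>j\<in>{0..<n}. \<Sum>l\<in>{0..<d}. X $$ (p div d, j) * Y $$ (p mod d, l) * v $ (j*d+l))"
    unfolding sum_split_prod using d by (intro sum.cong refl) simp
  also have "\<dots> = (X * tom n d v * transpose_mat Y) $$ (p div d, p mod d)"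
    using X Y i k by (simp add: tom_def times_mat_def scalar_prod_def sum_distrib_left sum_distrib_right mult.assoc mult.left_commute)
       (subst sum.swap, simp add: mult.commute mult.left_commute)
  finally show "(kron X Y *\<^sub>v v) $ p = tov n' d (X * tom n d v * transpose_mat Y) $ p"
    using p by (simp add: tov_def)
qed


lemma diagm_carrier[simp]: "diagm n f \<in> carrier_mat n n" by (simp add: diagm_def)
lemma diagm_dims[simp]: "dim_row (diagm n f) = n" "dim_col (diagm n f) = n" by (simp_all add: diagm_def)

lemma sum_delta_l[simp]: "(\<Sum>k\<in>{0..<n::nat}. (if i = k then c k else 0) * g k) = (if i < n then c i * g i else (0::real))"
proof -
  have "(\<Sum>k\<in>{0..<n}. (if i = k then c k else 0) * g k) = (\<Sum>k\<in>{0..<n}. (if i = k then c k * g k else 0))"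
    by (intro sum.cong) auto
  then show ?thesis by (simp add: sum.delta sum.delta')
qed
lemma sum_delta_r[simp]: "(\<Sum>k\<in>{0..<n::nat}. g k * (if k = i then c k else 0)) = (if i < n then g i * c i else (0::real))"
proof -
  have "(\<Sum>k\<in>{0..<n}. g k * (if k = i then c k else 0)) = (\<Sum>k\<in>{0..<n}. (if i = k then g k * c k else 0))"
    by (intro sum.cong) auto
  then show ?thesis by (simp add: sum.delta sum.delta')
qed
lemma diagm_mult_entry: "X \<in> carrier_mat n k \<Longrightarrow> i < n \<Longrightarrow> j < k \<Longrightarrow> (diagm n f * X) $$ (i,j) = f i * X $$ (i,j)"
  by (simp add: diagm_def times_mat_def scalar_prod_def row_def col_def)
lemma mult_diagm_entry: "X \<in> carrier_mat k n \<Longrightarrow> i < k \<Longrightarrow> j < n \<Longrightarrow> (X * diagm n f) $$ (i,j) = X $$ (i,j) * f j"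
  by (simp add: diagm_def times_mat_def scalar_prod_def row_def col_def)
lemma diagm_mult_vec: "v \<in> carrier_vec n \<Longrightarrow> i < n \<Longrightarrow> (diagm n f *\<^sub>v v) $ i = f i * v $ i"
  by (simp add: diagm_def mult_mat_vec_def scalar_prod_def row_def)

definition uu :: "nat \<Rightarrow> nat \<Rightarrow> real" where
  "uu s i = (if i < s div 2 then sqrt 2 / 2 else if i < (s+1) div 2 then 0 else sqrt 2 / 2)"
definition ww :: "nat \<Rightarrow> nat \<Rightarrow> real" where
  "ww s i = (if i < s div 2 then sqrt 2 / 2 else if i < (s+1) div 2 then 1 else - (sqrt 2 / 2))"

lemma PT_entry: "i < s \<Longrightarrow> k < s \<Longrightarrow> PT_mat s $$ (i,k) =
   uu s i * (if k = s - 1 - i then 1 else 0) + ww s i * (if k = i then 1 else 0)"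
  by (auto simp: PT_mat_def uu_def ww_def)

lemma PT_carrier[simp]: "PT_mat s \<in> carrier_mat s s" by (simp add: PT_mat_def)
lemma PT_dims[simp]: "dim_row (PT_mat s) = s" "dim_col (PT_mat s) = s" by (simp_all add: PT_mat_def)

lemma delta_prod: "(if k = a then 1 else 0) * (if k = b then 1 else 0) = (if k = a then (if a = b then 1 else 0) else (0::real))"
  by auto

lemma sum_two_deltas: assumes "a < n" "b < n" "a' < n" "b' < n"
  shows "(\<Sum>k\<in>{0..<n::nat}. (x * (if k = a then 1 else 0) + y * (if k = b then 1 else 0)) *
                       (x' * (if k = a' then 1 else 0) + y' * (if k = b' then 1 else 0)) :: real) =
     x*x'*(if a = a' then 1 else 0) + x*y'*(if a = b' then 1 else 0) + y*x'*(if b = a' then 1 else 0) + y*y'*(if b = b' then 1 else 0)"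
proof -
  have "(\<Sum>k\<in>{0..<n}. (x * (if k = a then 1 else 0) + y * (if k = b then 1 else 0)) *
                       (x' * (if k = a' then 1 else 0) + y' * (if k = b' then 1 else 0)) :: real) =
     (\<Sum>k\<in>{0..<n}. (if k = a then x*x'*(if a = a' then 1 else 0) else 0) + (if k = a then x*y'*(if a = b' then 1 else 0) else 0)
        + (if k = b then y*x'*(if b = a' then 1 else 0) else 0) + (if k = b then y*y'*(if b = b' then 1 else 0) else 0))"
    by (intro sum.cong refl) (auto simp: algebra_simps)
  also have "\<dots> = x*x'*(if a = a' then 1 else 0) + x*y'*(if a = b' then 1 else 0) + y*x'*(if b = a' then 1 else 0) + y*y'*(if b = b' then 1 else 0)"
    using assms by (simp add: sum.distrib sum.delta sum.delta')
  finally show ?thesis .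
qed

lemma sqrt2_sq: "sqrt 2 / 2 * (sqrt 2 / 2) = (1/2::real)"
  by (simp add: field_simps)

lemma PT_orth: "PT_mat s * transpose_mat (PT_mat s) = 1\<^sub>m s"
proof (rule eq_matI)
  fix i j assume "i < dim_row (1\<^sub>m s)" "j < dim_col (1\<^sub>m s)"
  hence ij: "i < s" "j < s" by auto
  have "(PT_mat s * transpose_mat (PT_mat s)) $$ (i,j) = (\<Sum>k\<in>{0..<s}. PT_mat s $$ (i,k) * PT_mat s $$ (j,k))"
    using ij by (simp add: times_mat_def scalar_prod_def)
  also have "\<dots> = (\<Sum>k\<in>{0..<s}. (uu s i * (if k = s - 1 - i then 1 else 0) + ww s i * (if k = i then 1 else 0)) *
                       (uu s j * (if k = s - 1 - j then 1 else 0) + ww s j * (if k = j then 1 else 0)))"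
    using ij by (intro sum.cong refl) (simp add: PT_entry)
  also have "\<dots> = uu s i * uu s j * (if s - 1 - i = s - 1 - j then 1 else 0) + uu s i * ww s j * (if s - 1 - i = j then 1 else 0)
     + ww s i * uu s j * (if i = s - 1 - j then 1 else 0) + ww s i * ww s j * (if i = j then 1 else 0)"
    using ij by (intro sum_two_deltas) auto
  also have "\<dots> = 1\<^sub>m s $$ (i,j)"
  proof (cases "i = j")
    case True
    then show ?thesis using ij by (auto simp: uu_def ww_def sqrt2_sq)
  next
    case False
    show ?thesis
    proof (cases "j = s - 1 - i")
      case True
      then show ?thesis using ij False by (auto simp: uu_def ww_def sqrt2_sq)
    next
      case F2: False
      then have "i \<noteq> s - 1 - j" using ij by auto
      then show ?thesis using ij False F2 by (auto simp: uu_def ww_def)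
    qed
  qed
  finally show "(PT_mat s * transpose_mat (PT_mat s)) $$ (i,j) = 1\<^sub>m s $$ (i,j)" .
qed auto

lemma PTt_orth: "transpose_mat (PT_mat s) * PT_mat s = 1\<^sub>m s"
  by (rule mat_mult_left_right_inverse[OF _ _ PT_orth]) auto


lemma m_le: "(s+1) div 2 \<le> (s::nat)" by simp

lemma P1_carrier[simp]: "P1_mat s \<in> carrier_mat s ((s+1) div 2)" by (simp add: P1_mat_def)
lemma P1_dims[simp]: "dim_row (P1_mat s) = s" "dim_col (P1_mat s) = (s+1) div 2" by (simp_all add: P1_mat_def)
lemma P2_carrier[simp]: "P2_mat s \<in> carrier_mat s (s - (s+1) div 2)" by (simp add: P2_mat_def)
lemma P2_dims[simp]: "dim_row (P2_mat s) = s" "dim_col (P2_mat s) = s - (s+1) div 2" by (simp_all add: P2_mat_def)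
lemma P1_entry: "i < s \<Longrightarrow> j < (s+1) div 2 \<Longrightarrow> P1_mat s $$ (i,j) = PT_mat s $$ (j,i)"
  using m_le[of s] by (simp add: P1_mat_def)
lemma P2_entry: "i < s \<Longrightarrow> j < s - (s+1) div 2 \<Longrightarrow> P2_mat s $$ (i,j) = PT_mat s $$ (j + (s+1) div 2,i)"
  by (simp add: P2_mat_def)

lemma PPt_entry: "i < s \<Longrightarrow> j < s \<Longrightarrow> (\<Sum>k\<in>{0..<s}. PT_mat s $$ (i,k) * PT_mat s $$ (j,k)) = (if i = j then 1 else 0)"
proof -
  assume ij: "i < s" "j < s"
  have "(PT_mat s * transpose_mat (PT_mat s)) $$ (i,j) = (\<Sum>k\<in>{0..<s}. PT_mat s $$ (i,k) * PT_mat s $$ (j,k))"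
    using ij by (simp add: times_mat_def scalar_prod_def)
  then show ?thesis using PT_orth[of s] ij by simp
qed

lemma PtP_entry: "i < s \<Longrightarrow> j < s \<Longrightarrow> (\<Sum>k\<in>{0..<s}. PT_mat s $$ (k,i) * PT_mat s $$ (k,j)) = (if i = j then 1 else 0)"
proof -
  assume ij: "i < s" "j < s"
  have "(transpose_mat (PT_mat s) * PT_mat s) $$ (i,j) = (\<Sum>k\<in>{0..<s}. PT_mat s $$ (k,i) * PT_mat s $$ (k,j))"
    using ij by (simp add: times_mat_def scalar_prod_def)
  then show ?thesis using PTt_orth[of s] ij by simp
qed

lemma P1tP1: "transpose_mat (P1_mat s) * P1_mat s = 1\<^sub>m ((s+1) div 2)"
proof (rule eq_matI)
  fix i j assume "i < dim_row (1\<^sub>m ((s+1) div 2))" "j < dim_col (1\<^sub>m ((s+1) div 2))"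
  hence ij: "i < (s+1) div 2" "j < (s+1) div 2" by auto
  hence ij': "i < s" "j < s" by auto
  have "(transpose_mat (P1_mat s) * P1_mat s) $$ (i,j) = (\<Sum>k\<in>{0..<s}. PT_mat s $$ (i,k) * PT_mat s $$ (j,k))"
    using ij by (simp add: times_mat_def scalar_prod_def P1_entry)
  then show "(transpose_mat (P1_mat s) * P1_mat s) $$ (i,j) = 1\<^sub>m ((s+1) div 2) $$ (i,j)"
    using PPt_entry[OF ij'] ij by simp
qed auto

lemma P2tP2: "transpose_mat (P2_mat s) * P2_mat s = 1\<^sub>m (s - (s+1) div 2)"
proof (rule eq_matI)
  fix i j assume "i < dim_row (1\<^sub>m (s - (s+1) div 2))" "j < dim_col (1\<^sub>m (s - (s+1) div 2))"
  hence ij: "i < s - (s+1) div 2" "j < s - (s+1) div 2" by auto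
  hence ij': "i + (s+1) div 2 < s" "j + (s+1) div 2 < s" by auto
  have "(transpose_mat (P2_mat s) * P2_mat s) $$ (i,j) = (\<Sum>k\<in>{0..<s}. PT_mat s $$ (i + (s+1) div 2,k) * PT_mat s $$ (j + (s+1) div 2,k))"
    using ij by (simp add: times_mat_def scalar_prod_def P2_entry)
  then show "(transpose_mat (P2_mat s) * P2_mat s) $$ (i,j) = 1\<^sub>m (s - (s+1) div 2) $$ (i,j)"
    using PPt_entry[OF ij'] ij by simp
qed auto

lemma P1tP2: "transpose_mat (P1_mat s) * P2_mat s = 0\<^sub>m ((s+1) div 2) (s - (s+1) div 2)"
proof (rule eq_matI)
  fix i j assume "i < dim_row (0\<^sub>m ((s+1) div 2) (s - (s+1) div 2))" "j < dim_col (0\<^sub>m ((s+1) div 2) (s - (s+1) div 2))"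
  hence ij: "i < (s+1) div 2" "j < s - (s+1) div 2" by auto
  hence ij': "i < s" "j + (s+1) div 2 < s" by auto
  have "(transpose_mat (P1_mat s) * P2_mat s) $$ (i,j) = (\<Sum>k\<in>{0..<s}. PT_mat s $$ (i,k) * PT_mat s $$ (j + (s+1) div 2,k))"
    using ij by (simp add: times_mat_def scalar_prod_def P2_entry P1_entry)
  then show "(transpose_mat (P1_mat s) * P2_mat s) $$ (i,j) = 0\<^sub>m ((s+1) div 2) (s - (s+1) div 2) $$ (i,j)"
    using PPt_entry[OF ij'] ij by simp
qed auto

lemma P2tP1: "transpose_mat (P2_mat s) * P1_mat s = 0\<^sub>m (s - (s+1) div 2) ((s+1) div 2)"
proof (rule eq_matI)
  fix i j assume "i < dim_row (0\<^sub>m (s - (s+1) div 2) ((s+1) div 2))" "j < dim_col (0\<^sub>m (s - (s+1) div 2) ((s+1) div 2))"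
  hence ij: "i < s - (s+1) div 2" "j < (s+1) div 2" by auto
  hence ij': "i + (s+1) div 2 < s" "j < s" by auto
  have "(transpose_mat (P2_mat s) * P1_mat s) $$ (i,j) = (\<Sum>k\<in>{0..<s}. PT_mat s $$ (i + (s+1) div 2,k) * PT_mat s $$ (j,k))"
    using ij by (simp add: times_mat_def scalar_prod_def P2_entry P1_entry)
  then show "(transpose_mat (P2_mat s) * P1_mat s) $$ (i,j) = 0\<^sub>m (s - (s+1) div 2) ((s+1) div 2) $$ (i,j)"
    using PPt_entry[OF ij'] ij by simp
qed auto

lemma PPt_sum: "P1_mat s * transpose_mat (P1_mat s) + P2_mat s * transpose_mat (P2_mat s) = 1\<^sub>m s"
proof (rule eq_matI)
  fix i j assume "i < dim_row (1\<^sub>m s)" "j < dim_col (1\<^sub>m s)"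
  hence ij: "i < s" "j < s" by auto
  let ?m = "(s+1) div 2"
  let ?f = "\<lambda>k. PT_mat s $$ (k,i) * PT_mat s $$ (k,j)"
  have "(P1_mat s * transpose_mat (P1_mat s) + P2_mat s * transpose_mat (P2_mat s)) $$ (i,j)
     = (\<Sum>k\<in>{0..<?m}. ?f k) + (\<Sum>k\<in>{0..<s - ?m}. ?f (k + ?m))"
    using ij by (simp add: times_mat_def scalar_prod_def P2_entry P1_entry)
  also have "(\<Sum>k\<in>{0..<s - ?m}. ?f (k + ?m)) = (\<Sum>k\<in>{?m..<s}. ?f k)"
    using sum.shift_bounds_nat_ivl[of ?f 0 ?m "s - ?m"] by simp
  also have "(\<Sum>k\<in>{0..<?m}. ?f k) + (\<Sum>k\<in>{?m..<s}. ?f k) = (\<Sum>k\<in>{0..<s}. ?f k)"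
    by (rule sum.atLeastLessThan_concat) auto
  also have "\<dots> = 1\<^sub>m s $$ (i,j)" using PtP_entry[OF ij] ij by simp
  finally show "(P1_mat s * transpose_mat (P1_mat s) + P2_mat s * transpose_mat (P2_mat s)) $$ (i,j) = 1\<^sub>m s $$ (i,j)" .
qed auto

definition Fl :: "nat \<Rightarrow> real mat" where "Fl s = mat s s (\<lambda>(i,j). if j = s - 1 - i then 1 else 0)"
lemma Fl_carrier[simp]: "Fl s \<in> carrier_mat s s" by (simp add: Fl_def)
lemma Fl_dims[simp]: "dim_row (Fl s) = s" "dim_col (Fl s) = s" by (simp_all add: Fl_def)

lemma Fl_mult_entry: "X \<in> carrier_mat s k \<Longrightarrow> i < s \<Longrightarrow> j < k \<Longrightarrow> (Fl s * X) $$ (i,j) = X $$ (s - 1 - i, j)"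
proof -
  assume a: "X \<in> carrier_mat s k" "i < s" "j < k"
  have "(Fl s * X) $$ (i,j) = (\<Sum>l\<in>{0..<s}. (if l = s - 1 - i then 1 else 0) * X $$ (l,j))"
    using a by (simp add: times_mat_def scalar_prod_def Fl_def)
  also have "\<dots> = (\<Sum>l\<in>{0..<s}. if s - 1 - i = l then X $$ (l,j) else 0)" by (intro sum.cong) auto
  finally show ?thesis using a by (simp add: sum.delta')
qed

lemma mult_Fl_entry: "X \<in> carrier_mat k s \<Longrightarrow> i < k \<Longrightarrow> j < s \<Longrightarrow> (X * Fl s) $$ (i,j) = X $$ (i, s - 1 - j)"
proof -
  assume a: "X \<in> carrier_mat k s" "i < k" "j < s"
  have "(X * Fl s) $$ (i,j) = (\<Sum>l\<in>{0..<s}. X $$ (i,l) * (if j = s - 1 - l then 1 else 0))"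
    using a by (simp add: times_mat_def scalar_prod_def Fl_def)
  also have "\<dots> = (\<Sum>l\<in>{0..<s}. if s - 1 - j = l then X $$ (i,l) else 0)" using a by (intro sum.cong) auto
  finally show ?thesis using a by (simp add: sum.delta')
qed

lemma Fl_transpose: "transpose_mat (Fl s) = Fl s"
  by (rule eq_matI) (auto simp: Fl_def)

lemma Fl_P1: "Fl s * P1_mat s = P1_mat s"
proof (rule eq_matI)
  fix i j assume "i < dim_row (P1_mat s)" "j < dim_col (P1_mat s)"
  hence ij: "i < s" "j < (s+1) div 2" by auto
  hence j: "j < s" by auto
  have "(Fl s * P1_mat s) $$ (i,j) = PT_mat s $$ (j, s - 1 - i)" using ij Fl_mult_entry[OF P1_carrier ij] by (simp add: P1_entry)
  also have "\<dots> = uu s j * (if i = j then 1 else 0) + ww s j * (if i = s - 1 - j then 1 else 0)"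
  proof -
    have e1: "(s - 1 - i = s - 1 - j) = (i = j)" "(s - 1 - i = j) = (i = s - 1 - j)" using ij j by auto
    show ?thesis using ij j by (simp only: PT_entry e1; simp)
  qed
  also have "\<dots> = PT_mat s $$ (j, i)"
  proof (cases "j < s div 2")
    case True
    then have "uu s j = ww s j" by (simp add: uu_def ww_def)
    then show ?thesis using ij j by (simp add: PT_entry algebra_simps)
  next
    case False
    then have "s - 1 - j = j" using ij by linarith
    then show ?thesis using ij j by (simp add: PT_entry algebra_simps)
  qed
  finally show "(Fl s * P1_mat s) $$ (i,j) = P1_mat s $$ (i,j)" using ij by (simp add: P1_entry)
qed auto

lemma Fl_P2: "Fl s * P2_mat s = - P2_mat s"
proof (rule eq_matI)
  fix i j assume "i < dim_row (- P2_mat s)" "j < dim_col (- P2_mat s)"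
  hence ij: "i < s" "j < s - (s+1) div 2" by auto
  hence j: "j + (s+1) div 2 < s" by auto
  have "(Fl s * P2_mat s) $$ (i,j) = PT_mat s $$ (j + (s+1) div 2, s - 1 - i)" using ij Fl_mult_entry[OF P2_carrier ij] by (simp add: P2_entry)
  also have "\<dots> = - PT_mat s $$ (j + (s+1) div 2, i)"
  proof -
    have e1: "(s - 1 - i = s - 1 - (j + (s+1) div 2)) = (i = j + (s+1) div 2)" "(s - 1 - i = j + (s+1) div 2) = (i = s - 1 - (j + (s+1) div 2))" using ij j by auto
    have u: "uu s (j + (s+1) div 2) = sqrt 2 / 2" "ww s (j + (s+1) div 2) = - (sqrt 2 / 2)" by (simp_all add: uu_def ww_def)
    show ?thesis using ij j by (simp only: PT_entry e1 u; simp add: algebra_simps)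
  qed
  finally show "(Fl s * P2_mat s) $$ (i,j) = (- P2_mat s) $$ (i,j)" using ij by (simp add: P2_entry)
qed auto



lemma assoc': "dim_col (A::'a::semiring_0 mat) = dim_row B \<Longrightarrow> dim_col B = dim_row C \<Longrightarrow> A * B * C = A * (B * C)"
  by (rule assoc_mult_mat[of A "dim_row A" "dim_col A" B "dim_col B" C "dim_col C"]) auto
lemma distl': "dim_col (A::'a::semiring_0 mat) = dim_row B \<Longrightarrow> dim_row C = dim_row B \<Longrightarrow> dim_col C = dim_col B \<Longrightarrow> A * (B + C) = A * B + A * C"
  by (rule mult_add_distrib_mat[of A "dim_row A" "dim_col A" B "dim_col B"]) auto
lemma distr': "dim_col (A::'a::semiring_0 mat) = dim_row C \<Longrightarrow> dim_row B = dim_row A \<Longrightarrow> dim_col B = dim_col A \<Longrightarrow> (A + B) * C = A * C + B * C"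
  by (rule add_mult_distrib_mat[of A "dim_row A" "dim_col A" B C "dim_col C"]) auto
lemma smultr': "dim_col (A::'a::comm_semiring_0 mat) = dim_row B \<Longrightarrow> A * (k \<cdot>\<^sub>m B) = k \<cdot>\<^sub>m (A * B)"
  by (rule mult_smult_distrib[of A "dim_row A" "dim_col A" B "dim_col B"]) auto
lemma smultl': "dim_col (A::'a::comm_semiring_0 mat) = dim_row B \<Longrightarrow> (k \<cdot>\<^sub>m A) * B = k \<cdot>\<^sub>m (A * B)"
  by (rule mult_smult_assoc_mat[of A "dim_row A" "dim_col A" B "dim_col B"]) auto
lemma transp': "dim_col (A::'a::comm_semiring_0 mat) = dim_row B \<Longrightarrow> transpose_mat (A * B) = transpose_mat B * transpose_mat A"
  by (rule transpose_mult[of A "dim_row A" "dim_col A" B "dim_col B"]) auto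

lemma diagm_transpose[simp]: "transpose_mat (diagm n f) = diagm n f"
  by (rule eq_matI) (auto simp: diagm_def)

lemma diagm_mult_diagm: "diagm n f * diagm n g = diagm n (\<lambda>i. f i * g i)"
proof (rule eq_matI)
  fix i j assume "i < dim_row (diagm n (\<lambda>i. f i * g i))" "j < dim_col (diagm n (\<lambda>i. f i * g i))"
  then show "(diagm n f * diagm n g) $$ (i, j) = diagm n (\<lambda>i. f i * g i) $$ (i, j)"
    by (subst diagm_mult_entry[of "diagm n g" n n]) (auto simp: diagm_def)
qed auto

lemma diagm_one: "(\<And>i. i < n \<Longrightarrow> f i = 1) \<Longrightarrow> diagm n f = 1\<^sub>m n"
  by (rule eq_matI) (auto simp: diagm_def)

lemma neg_self_zero: "X \<in> carrier_mat n k \<Longrightarrow> X = - (X :: real mat) \<Longrightarrow> X = 0\<^sub>m n k"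
proof (rule eq_matI)
  fix i j assume a: "X \<in> carrier_mat n k" "X = - X" "i < dim_row (0\<^sub>m n k)" "j < dim_col (0\<^sub>m n k)"
  then have 1: "X $$ (i,j) = (- X) $$ (i,j)" by metis
  have dd: "dim_row X = n" "dim_col X = k" using a(1) by auto
  have "X $$ (i,j) = - X $$ (i,j)" using 1 a(3,4) dd by simp
  then show "X $$ (i,j) = 0\<^sub>m n k $$ (i,j)" using a by simp
qed (auto)

lemma frac_helper: "(x::real) > 0 \<Longrightarrow> y > 0 \<Longrightarrow> y * c * (1 / x) = (y * y * c) / (x * y)"
  by (simp add: field_simps)

lemma sum_two_delta1: assumes "a < n" "c < n"
  shows "(\<Sum>k\<in>{0..<n::nat}. (x * (if k = a then 1 else 0) + y * (if k = c then 1 else 0)) * f k) = x * f a + (y * f c :: real)"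
proof -
  have "(\<Sum>k\<in>{0..<n::nat}. (x * (if k = a then 1 else 0) + y * (if k = c then 1 else 0)) * f k) =
    (\<Sum>k\<in>{0..<n::nat}. (if k = a then x * f a else 0) + (if k = c then y * f c else 0))"
    by (intro sum.cong) (auto simp: ring_distribs)
  then show ?thesis using assms by (simp add: sum.distrib)
qed

locale sctx =
  fixes s :: nat and A :: "real mat" and b :: "real vec" and U V D :: "real mat"
  assumes s_pos: "s \<ge> 1"
    and A_dim: "A \<in> carrier_mat s s" and b_dim: "b \<in> carrier_vec s"
    and b_pos: "\<forall>i<s. b $ i > 0"
    and sympl: "\<forall>i<s. \<forall>j<s. b $ i * A $$ (i,j) + b $ j * A $$ (j,i) - b $ i * b $ j = 0"
    and symm_b: "\<forall>i<s. b $ (s - 1 - i) = b $ i"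
    and symm_A: "\<forall>i<s. \<forall>j<s. b $ j = A $$ (s - 1 - i, s - 1 - j) + A $$ (i,j)"
    and U_dim: "U \<in> carrier_mat ((s+1) div 2) ((s+1) div 2)" and U_orth: "transpose_mat U * U = 1\<^sub>m ((s+1) div 2)"
    and V_dim: "V \<in> carrier_mat (s - (s+1) div 2) (s - (s+1) div 2)" and V_orth: "transpose_mat V * V = 1\<^sub>m (s - (s+1) div 2)"
    and D_dim: "D \<in> carrier_mat ((s+1) div 2) (s - (s+1) div 2)"
    and svd: "transpose_mat (P1_mat s) * diagm s (\<lambda>i. sqrt (b $ i)) * mat s s (\<lambda>(i,j). A $$ (i,j) - b $ j / 2)
         * diagm s (\<lambda>i. 1 / sqrt (b $ i)) * P2_mat s = U * D * transpose_mat V"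
begin

abbreviation "ms \<equiv> (s+1) div 2"
abbreviation "Bm \<equiv> diagm s (\<lambda>i. b $ i)"
abbreviation "Bh \<equiv> diagm s (\<lambda>i. sqrt (b $ i))"
abbreviation "Bmh \<equiv> diagm s (\<lambda>i. 1 / sqrt (b $ i))"
abbreviation "Ab \<equiv> mat s s (\<lambda>(i,j). A $$ (i,j) - b $ j / 2)"
abbreviation "P1 \<equiv> P1_mat s"
abbreviation "P2 \<equiv> P2_mat s"
abbreviation "SS \<equiv> Bh * Ab * Bmh"
abbreviation "KK \<equiv> transpose_mat P1 * Bh * Ab * Bmh * P2"
abbreviation "EE \<equiv> mat s s (\<lambda>(i,j). b $ j / 2)"

lemma dims[simp]: "dim_row U = ms" "dim_col U = ms" "dim_row V = s - ms" "dim_col V = s - ms"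
  "dim_row D = ms" "dim_col D = s - ms" "dim_row A = s" "dim_col A = s" "dim_vec b = s"
  using U_dim V_dim D_dim A_dim b_dim by auto

lemma SS_carrier[simp]: "SS \<in> carrier_mat s s" by (simp add: carrier_matI)

lemma sqb: "i < s \<Longrightarrow> sqrt (b $ i) > 0" using b_pos by simp

lemma Bmh_Bh: "dim_row X = s \<Longrightarrow> Bmh * (Bh * X) = X"
proof -
  assume X: "dim_row X = s"
  have "Bmh * Bh = 1\<^sub>m s" unfolding diagm_mult_diagm
  proof (rule diagm_one)
    fix i assume "i < s" then have "sqrt (b $ i) > 0" by (rule sqb)
    then show "1 / sqrt (b $ i) * sqrt (b $ i) = 1" by simp
  qed
  then have "Bmh * Bh * X = X" using X by simp
  then show ?thesis using X by (simp add: assoc')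
qed

lemma Bh_Bmh: "dim_row X = s \<Longrightarrow> Bh * (Bmh * X) = X"
proof -
  assume X: "dim_row X = s"
  have "Bh * Bmh = 1\<^sub>m s" unfolding diagm_mult_diagm
  proof (rule diagm_one)
    fix i assume "i < s" then have "sqrt (b $ i) > 0" by (rule sqb)
    then show "sqrt (b $ i) * (1 / sqrt (b $ i)) = 1" by simp
  qed
  then have "Bh * Bmh * X = X" using X by simp
  then show ?thesis using X by (simp add: assoc')
qed

lemma Bmh_Bm: "Bmh * Bm = Bh"
  unfolding diagm_mult_diagm
  by (rule eq_matI) (auto simp: diagm_def b_pos less_imp_le real_div_sqrt)

lemma U_orth2: "U * transpose_mat U = 1\<^sub>m ms"
  using mat_mult_left_right_inverse[OF _ U_dim U_orth] U_dim by simp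
lemma V_orth2: "V * transpose_mat V = 1\<^sub>m (s - ms)"
  using mat_mult_left_right_inverse[OF _ V_dim V_orth] V_dim by simp
lemma U_cancel: "dim_row X = ms \<Longrightarrow> transpose_mat U * (U * X) = X"
proof -
  assume X: "dim_row X = ms"
  have "transpose_mat U * (U * X) = transpose_mat U * U * X" using X by (simp add: assoc')
  then show ?thesis using X U_orth by simp
qed
lemma U_cancel2: "dim_row X = ms \<Longrightarrow> U * (transpose_mat U * X) = X"
proof -
  assume X: "dim_row X = ms"
  have "U * (transpose_mat U * X) = U * transpose_mat U * X" using X by (simp add: assoc')
  then show ?thesis using X U_orth2 by simp
qed
lemma V_cancel: "dim_row X = s - ms \<Longrightarrow> transpose_mat V * (V * X) = X"
proof -
  assume X: "dim_row X = s - ms"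
  have "transpose_mat V * (V * X) = transpose_mat V * V * X" using X by (simp add: assoc')
  then show ?thesis using X V_orth by simp
qed
lemma V_cancel2: "dim_row X = s - ms \<Longrightarrow> V * (transpose_mat V * X) = X"
proof -
  assume X: "dim_row X = s - ms"
  have "V * (transpose_mat V * X) = V * transpose_mat V * X" using X by (simp add: assoc')
  then show ?thesis using X V_orth2 by simp
qed

lemma SS_entry: "i < s \<Longrightarrow> j < s \<Longrightarrow> SS $$ (i,j) = sqrt (b $ i) * (A $$ (i,j) - b $ j / 2) * (1 / sqrt (b $ j))"
proof -
  assume ij: "i < s" "j < s"
  have c: "Bh * Ab \<in> carrier_mat s s" by (simp add: carrier_matI)
  have "SS $$ (i,j) = (Bh * Ab) $$ (i,j) * (1 / sqrt (b $ j))"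
    using ij mult_diagm_entry[OF c ij] by simp
  also have "(Bh * Ab) $$ (i,j) = sqrt (b $ i) * Ab $$ (i,j)" by (rule diagm_mult_entry) (use ij in auto)
  finally show ?thesis using ij by simp
qed

lemma SS_skew: "transpose_mat SS = - SS"
proof (rule eq_matI)
  fix i j assume "i < dim_row (- SS)" "j < dim_col (- SS)"
  hence ij: "i < s" "j < s" by auto
  have bi: "b $ i = sqrt (b $ i) * sqrt (b $ i)" "b $ j = sqrt (b $ j) * sqrt (b $ j)"
    using b_pos ij by (simp_all add: less_imp_le)
  have pi: "sqrt (b $ i) > 0" "sqrt (b $ j) > 0" using sqb ij by auto
  have e: "b $ i * A $$ (i,j) + b $ j * A $$ (j,i) - b $ i * b $ j = 0" using sympl ij by auto
  have e2: "b $ j * (A $$ (j,i) - b $ i / 2) = - (b $ i * (A $$ (i,j) - b $ j / 2))"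
    using e by (simp add: algebra_simps)
  have xx: "sqrt (b $ i) * sqrt (b $ i) = b $ i" "sqrt (b $ j) * sqrt (b $ j) = b $ j" using bi by simp_all
  have h: "sqrt (b $ j) * sqrt (b $ j) * (A $$ (j,i) - b $ i / 2) = - (sqrt (b $ i) * sqrt (b $ i) * (A $$ (i,j) - b $ j / 2))"
    unfolding xx by (rule e2)
  have h1: "sqrt (b $ j) * (A $$ (j,i) - b $ i / 2) * (1 / sqrt (b $ i)) = (sqrt (b $ j) * sqrt (b $ j) * (A $$ (j,i) - b $ i / 2)) / (sqrt (b $ i) * sqrt (b $ j))"
    using frac_helper[OF pi] by simp
  have h2: "- (sqrt (b $ i) * (A $$ (i,j) - b $ j / 2) * (1 / sqrt (b $ j))) = - (sqrt (b $ i) * sqrt (b $ i) * (A $$ (i,j) - b $ j / 2)) / (sqrt (b $ i) * sqrt (b $ j))"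
    using frac_helper[OF pi(2) pi(1), of "A $$ (i,j) - b $ j / 2"] by (simp add: mult.commute)
  have "sqrt (b $ j) * (A $$ (j,i) - b $ i / 2) * (1 / sqrt (b $ i)) = - (sqrt (b $ i) * (A $$ (i,j) - b $ j / 2) * (1 / sqrt (b $ j)))"
    unfolding h1 h2 h ..
  moreover have t: "transpose_mat SS $$ (i,j) = SS $$ (j,i)" using ij by (intro index_transpose_mat(1)) auto
  moreover have n: "(- SS) $$ (i,j) = - SS $$ (i,j)" using ij by (intro index_uminus_mat(1)) auto
  ultimately show "transpose_mat SS $$ (i,j) = (- SS) $$ (i,j)" by (simp only: SS_entry[OF ij(2,1)] SS_entry[OF ij])
qed auto

lemma SS_flip: "Fl s * (SS * Fl s) = - SS"
proof (rule eq_matI)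
  fix i j assume "i < dim_row (- SS)" "j < dim_col (- SS)"
  hence ij: "i < s" "j < s" by auto
  have ij': "s - 1 - i < s" "s - 1 - j < s" using ij by auto
  have c: "SS * Fl s \<in> carrier_mat s s" by (simp add: carrier_matI)
  have "(Fl s * (SS * Fl s)) $$ (i,j) = SS $$ (s - 1 - i, s - 1 - j)"
    using Fl_mult_entry[OF c ij] mult_Fl_entry[OF SS_carrier ij'(1) ij(2)] by simp
  also have "\<dots> = - SS $$ (i,j)"
  proof -
    have e1: "b $ (s - 1 - i) = b $ i" "b $ (s - 1 - j) = b $ j" using symm_b ij by auto
    have e2: "A $$ (s - 1 - i, s - 1 - j) = b $ j - A $$ (i,j)" using symm_A ij by force
    show ?thesis by (simp only: SS_entry[OF ij'] SS_entry[OF ij] e1 e2) (simp add: algebra_simps)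
  qed
  finally show "(Fl s * (SS * Fl s)) $$ (i,j) = (- SS) $$ (i,j)" using ij by simp
qed auto

end

lemma add0r'[simp]: "dim_row (A::'a::monoid_add mat) = n \<Longrightarrow> dim_col A = k \<Longrightarrow> A + 0\<^sub>m n k = A"
  by (rule eq_matI) auto
lemma add0l'[simp]: "dim_row (A::'a::monoid_add mat) = n \<Longrightarrow> dim_col A = k \<Longrightarrow> 0\<^sub>m n k + A = A"
  by (rule eq_matI) auto

lemma assocv': "dim_col (A::'a::comm_semiring_0 mat) = dim_row B \<Longrightarrow> dim_vec v = dim_col B \<Longrightarrow> (A * B) *\<^sub>v v = A *\<^sub>v (B *\<^sub>v v)"
proof -
  assume a: "dim_col A = dim_row B" "dim_vec v = dim_col B"
  have c: "A \<in> carrier_mat (dim_row A) (dim_col A)" "B \<in> carrier_mat (dim_col A) (dim_col B)" "v \<in> carrier_vec (dim_col B)"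
    by (rule carrier_matI, rule refl, rule refl) (rule carrier_matI, rule a(1)[symmetric], rule refl, rule carrier_vecI, rule a(2))
  show ?thesis by (rule assoc_mult_mat_vec[OF c])
qed
lemma distv': "dim_row (B::'a::semiring_0 mat) = dim_row A \<Longrightarrow> dim_col B = dim_col A \<Longrightarrow> dim_vec v = dim_col A \<Longrightarrow> (A + B) *\<^sub>v v = A *\<^sub>v v + B *\<^sub>v v"
proof -
  assume a: "dim_row B = dim_row A" "dim_col B = dim_col A" "dim_vec v = dim_col A"
  have c: "A \<in> carrier_mat (dim_row A) (dim_col A)" "B \<in> carrier_mat (dim_row A) (dim_col A)" "v \<in> carrier_vec (dim_col A)"
    by (rule carrier_matI, rule refl, rule refl) (rule carrier_matI, rule a(1), rule a(2), rule carrier_vecI, rule a(3))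
  show ?thesis by (rule add_mult_distrib_mat_vec[OF c])
qed
lemma add0v'[simp]: "dim_vec (v::'a::monoid_add vec) = n \<Longrightarrow> v + 0\<^sub>v n = v"
  by (rule eq_vecI) auto
lemma multv0'[simp]: "dim_col (A::'a::semiring_0 mat) = n \<Longrightarrow> A *\<^sub>v 0\<^sub>v n = 0\<^sub>v (dim_row A)"
  by (rule eq_vecI) (simp_all add: scalar_prod_def)

context sctx begin

definition "SSd = SS"
definition "Q1 = Bmh * P1 * U"
definition "Q2 = Bmh * P2 * V"
abbreviation "ee \<equiv> vec s (\<lambda>_. 1 :: real)"
definition "al = transpose_mat Q1 *\<^sub>v (Bm *\<^sub>v ee)"
definition "G = mat ms ms (\<lambda>(i,j). al $ i * al $ j / 2)"
definition "sb = vec s (\<lambda>k. sqrt (b $ k))"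

lemma dims2[simp]: "dim_row SSd = s" "dim_col SSd = s" "dim_row Q1 = s" "dim_col Q1 = ms"
  "dim_row Q2 = s" "dim_col Q2 = s - ms" "dim_vec al = ms" "dim_row G = ms" "dim_col G = ms" "dim_vec sb = s"
  by (simp_all add: SSd_def Q1_def Q2_def al_def G_def sb_def)

lemma BmhBh1: "Bmh * Bh = 1\<^sub>m s"
  unfolding diagm_mult_diagm
proof (rule diagm_one)
  fix i assume "i < s" then have "sqrt (b $ i) > 0" by (rule sqb)
  then show "1 / sqrt (b $ i) * sqrt (b $ i) = 1" by simp
qed

lemma SSd_skew: "transpose_mat SSd = - SSd" unfolding SSd_def by (rule SS_skew)
lemma SSd_flip: "Fl s * (SSd * Fl s) = - SSd" unfolding SSd_def by (rule SS_flip)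

lemma K_eq: "transpose_mat P1 * (SSd * P2) = U * (D * transpose_mat V)"
proof -
  have "transpose_mat P1 * (SSd * P2) = KK" unfolding SSd_def by (simp add: assoc')
  also have "\<dots> = U * D * transpose_mat V" by (rule svd)
  finally show ?thesis by (simp add: assoc')
qed

lemma P1SP1: "transpose_mat P1 * (SSd * P1) = 0\<^sub>m ms ms"
proof (rule neg_self_zero)
  show "transpose_mat P1 * (SSd * P1) \<in> carrier_mat ms ms" by (simp add: carrier_matI)
  have "transpose_mat P1 * (SSd * P1) = transpose_mat (Fl s * P1) * (SSd * (Fl s * P1))" by (simp add: Fl_P1)
  also have "\<dots> = transpose_mat P1 * ((Fl s * (SSd * Fl s)) * P1)" by (simp add: transp' assoc' Fl_transpose)
  also have "\<dots> = - (transpose_mat P1 * (SSd * P1))" by (simp add: SSd_flip)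
  finally show "transpose_mat P1 * (SSd * P1) = - (transpose_mat P1 * (SSd * P1))" .
qed

lemma P2SP2: "transpose_mat P2 * (SSd * P2) = 0\<^sub>m (s - ms) (s - ms)"
proof (rule neg_self_zero)
  show "transpose_mat P2 * (SSd * P2) \<in> carrier_mat (s - ms) (s - ms)" by (simp add: carrier_matI)
  have "transpose_mat P2 * (SSd * P2) = transpose_mat (- (Fl s * P2)) * (SSd * (- (Fl s * P2)))" by (simp add: Fl_P2)
  also have "\<dots> = transpose_mat P2 * ((Fl s * (SSd * Fl s)) * P2)" by (simp add: transp' assoc' Fl_transpose transpose_uminus)
  also have "\<dots> = - (transpose_mat P2 * (SSd * P2))" by (simp add: SSd_flip)
  finally show "transpose_mat P2 * (SSd * P2) = - (transpose_mat P2 * (SSd * P2))" .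
qed

lemma SP2: "SSd * P2 = P1 * (U * (D * transpose_mat V))"
proof -
  have "SSd * P2 = (P1 * transpose_mat P1 + P2 * transpose_mat P2) * (SSd * P2)" by (simp add: PPt_sum)
  also have "\<dots> = P1 * (transpose_mat P1 * (SSd * P2)) + P2 * (transpose_mat P2 * (SSd * P2))"
    by (simp add: distr' assoc')
  also have "\<dots> = P1 * (U * (D * transpose_mat V))" by (simp add: K_eq P2SP2)
  finally show ?thesis .
qed

lemma SP1: "SSd * P1 = - (P2 * (V * (transpose_mat D * transpose_mat U)))"
proof -
  have "transpose_mat (transpose_mat P2 * (SSd * P1)) = transpose_mat P1 * (transpose_mat SSd * P2)"
    by (simp add: transp' assoc')
  also have "\<dots> = - (U * (D * transpose_mat V))" by (simp add: SSd_skew K_eq)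
  finally have "transpose_mat (transpose_mat P2 * (SSd * P1)) = - (U * (D * transpose_mat V))" .
  then have "transpose_mat P2 * (SSd * P1) = transpose_mat (- (U * (D * transpose_mat V)))"
    by (metis transpose_transpose)
  also have "\<dots> = - (V * (transpose_mat D * transpose_mat U))" by (simp add: transpose_uminus transp' assoc')
  finally have e: "transpose_mat P2 * (SSd * P1) = - (V * (transpose_mat D * transpose_mat U))" .
  have "SSd * P1 = (P1 * transpose_mat P1 + P2 * transpose_mat P2) * (SSd * P1)" by (simp add: PPt_sum)
  also have "\<dots> = P1 * (transpose_mat P1 * (SSd * P1)) + P2 * (transpose_mat P2 * (SSd * P1))"
    by (simp add: distr' assoc')
  also have "\<dots> = - (P2 * (V * (transpose_mat D * transpose_mat U)))" by (simp add: e P1SP1)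
  finally show ?thesis .
qed

lemma Ab_eq: "Bmh * (SSd * Bh) = Ab"
proof -
  have "Bmh * (SSd * Bh) = Bmh * (Bh * (Ab * (Bmh * Bh)))" unfolding SSd_def by (simp add: assoc')
  also have "\<dots> = Ab" by (simp add: Bmh_Bh BmhBh1)
  finally show ?thesis .
qed

lemma A_eq: "A = Ab + EE"
  by (rule eq_matI) auto

lemma Q_completeness: "Q1 * (transpose_mat Q1 * Bm) + Q2 * (transpose_mat Q2 * Bm) = 1\<^sub>m s"
proof -
  have "Q1 * (transpose_mat Q1 * Bm) = Bmh * (P1 * (U * (transpose_mat U * (transpose_mat P1 * (Bmh * Bm)))))"
    unfolding Q1_def by (simp add: assoc' transp')
  also have "\<dots> = Bmh * (P1 * (transpose_mat P1 * Bh))" by (simp add: U_cancel2 Bmh_Bm)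
  finally have 1: "Q1 * (transpose_mat Q1 * Bm) = Bmh * (P1 * (transpose_mat P1 * Bh))" .
  have "Q2 * (transpose_mat Q2 * Bm) = Bmh * (P2 * (V * (transpose_mat V * (transpose_mat P2 * (Bmh * Bm)))))"
    unfolding Q2_def by (simp add: assoc' transp')
  also have "\<dots> = Bmh * (P2 * (transpose_mat P2 * Bh))" by (simp add: V_cancel2 Bmh_Bm)
  finally have 2: "Q2 * (transpose_mat Q2 * Bm) = Bmh * (P2 * (transpose_mat P2 * Bh))" .
  have "Bmh * (P1 * (transpose_mat P1 * Bh)) + Bmh * (P2 * (transpose_mat P2 * Bh)) = Bmh * ((P1 * transpose_mat P1 + P2 * transpose_mat P2) * Bh)"
    by (simp add: distr' distl' assoc')
  also have "\<dots> = 1\<^sub>m s" by (simp add: PPt_sum BmhBh1)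
  finally show ?thesis using 1 2 by simp
qed

lemma AbQ2: "Ab * Q2 = Q1 * D"
proof -
  have "Ab * Q2 = Bmh * (SSd * (Bh * (Bmh * (P2 * V))))" unfolding Ab_eq[symmetric] Q2_def by (simp add: assoc')
  also have "\<dots> = Bmh * ((SSd * P2) * V)" by (simp add: Bh_Bmh assoc')
  also have "\<dots> = Bmh * (P1 * (U * (D * (transpose_mat V * V))))" by (simp add: SP2 assoc')
  also have "\<dots> = Q1 * D" unfolding Q1_def by (simp add: V_orth assoc')
  finally show ?thesis .
qed

lemma AbQ1: "Ab * Q1 = - (Q2 * transpose_mat D)"
proof -
  have "Ab * Q1 = Bmh * (SSd * (Bh * (Bmh * (P1 * U))))" unfolding Ab_eq[symmetric] Q1_def by (simp add: assoc')
  also have "\<dots> = Bmh * ((SSd * P1) * U)" by (simp add: Bh_Bmh assoc')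
  also have "\<dots> = - (Bmh * (P2 * (V * (transpose_mat D * (transpose_mat U * U)))))" by (simp add: SP1 assoc')
  also have "\<dots> = - (Q2 * transpose_mat D)" unfolding Q2_def by (simp add: U_orth assoc')
  finally show ?thesis .
qed


lemma P2t_sb: "transpose_mat P2 *\<^sub>v sb = 0\<^sub>v (s - ms)"
proof (rule eq_vecI)
  fix j assume "j < dim_vec (0\<^sub>v (s - ms))"
  hence j: "j < s - ms" by simp
  hence j': "j + ms < s" by simp
  have "(transpose_mat P2 *\<^sub>v sb) $ j = (\<Sum>k\<in>{0..<s}. PT_mat s $$ (j+ms, k) * sqrt (b$k))"
    using j by (simp add: mult_mat_vec_def scalar_prod_def sb_def P2_entry)
  also have "\<dots> = (\<Sum>k\<in>{0..<s}. (uu s (j+ms) * (if k = s-1-(j+ms) then 1 else 0) + ww s (j+ms) * (if k = j+ms then 1 else 0)) * sqrt (b$k))"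
    using j' by (intro sum.cong) (simp_all add: PT_entry)
  also have "\<dots> = uu s (j+ms) * sqrt (b $ (s-1-(j+ms))) + ww s (j+ms) * sqrt (b $ (j+ms))"
    by (rule sum_two_delta1) (use j' in auto)
  also have "\<dots> = 0" using symm_b j' by (simp add: uu_def ww_def)
  finally show "(transpose_mat P2 *\<^sub>v sb) $ j = 0\<^sub>v (s - ms) $ j" using j by simp
qed auto

lemma Bm_ee: "Bm *\<^sub>v ee = b"
  by (rule eq_vecI) (subst diagm_mult_vec, auto)

lemma Bmh_b: "Bmh *\<^sub>v b = sb"
proof (rule eq_vecI)
  fix k assume "k < dim_vec sb"
  hence k: "k < s" by simp
  have "b $ k / sqrt (b $ k) = sqrt (b $ k)" using b_pos k by (simp add: real_div_sqrt less_imp_le)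
  then show "(Bmh *\<^sub>v b) $ k = sb $ k" by (subst diagm_mult_vec) (use k b_dim in \<open>auto simp: sb_def\<close>)
qed simp

lemma Q2t_b: "transpose_mat Q2 *\<^sub>v b = 0\<^sub>v (s - ms)"
proof -
  have "transpose_mat Q2 *\<^sub>v b = transpose_mat V *\<^sub>v (transpose_mat P2 *\<^sub>v (Bmh *\<^sub>v b))"
    unfolding Q2_def by (simp add: transp' assoc' assocv')
  also have "\<dots> = 0\<^sub>v (s - ms)" by (simp add: Bmh_b P2t_sb)
  finally show ?thesis .
qed

lemma al_b: "al = transpose_mat Q1 *\<^sub>v b" unfolding al_def Bm_ee ..

lemma Q1_al: "Q1 *\<^sub>v al = ee"
proof -
  have "ee = (Q1 * (transpose_mat Q1 * Bm) + Q2 * (transpose_mat Q2 * Bm)) *\<^sub>v ee" by (simp add: Q_completeness)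
  also have "\<dots> = Q1 *\<^sub>v (transpose_mat Q1 *\<^sub>v (Bm *\<^sub>v ee)) + Q2 *\<^sub>v (transpose_mat Q2 *\<^sub>v (Bm *\<^sub>v ee))"
    by (simp add: distv' assocv')
  also have "\<dots> = Q1 *\<^sub>v al" by (simp add: Bm_ee Q2t_b al_b)
  finally show ?thesis by simp
qed

lemma EE_Bmh: "EE * Bmh = mat s s (\<lambda>(i,k). sqrt (b $ k) / 2)"
proof (rule eq_matI)
  fix i k assume "i < dim_row (mat s s (\<lambda>(i,k). sqrt (b $ k) / 2))" "k < dim_col (mat s s (\<lambda>(i,k). sqrt (b $ k) / 2))"
  hence ik: "i < s" "k < s" by auto
  have "b $ k / sqrt (b $ k) = sqrt (b $ k)" using b_pos ik by (simp add: real_div_sqrt less_imp_le)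
  then show "(EE * Bmh) $$ (i,k) = mat s s (\<lambda>(i,k). sqrt (b $ k) / 2) $$ (i,k)"
    by (subst mult_diagm_entry[of _ s s]) (use ik in auto)
qed auto

lemma EE_Q2: "EE * Q2 = 0\<^sub>m s (s - ms)"
proof -
  have z: "mat s s (\<lambda>(i,k). sqrt (b $ k) / 2) * P2 = 0\<^sub>m s (s - ms)"
  proof (rule eq_matI)
    fix i j assume "i < dim_row (0\<^sub>m s (s - ms))" "j < dim_col (0\<^sub>m s (s - ms))"
    hence ij: "i < s" "j < s - ms" by auto
    have "(mat s s (\<lambda>(i,k). sqrt (b $ k) / 2) * P2) $$ (i,j) = (\<Sum>k\<in>{0..<s}. sqrt (b $ k) / 2 * P2 $$ (k,j))"
      using ij by (simp add: times_mat_def scalar_prod_def)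
    also have "\<dots> = (1/2) * (\<Sum>k\<in>{0..<s}. P2 $$ (k,j) * sqrt (b $ k))"
      by (subst sum_distrib_left) (rule sum.cong, auto)
    also have "(\<Sum>k\<in>{0..<s}. P2 $$ (k,j) * sqrt (b $ k)) = (transpose_mat P2 *\<^sub>v sb) $ j"
      using ij by (simp add: mult_mat_vec_def scalar_prod_def sb_def)
    also have "\<dots> = 0" using ij by (simp add: P2t_sb)
    finally show "(mat s s (\<lambda>(i,k). sqrt (b $ k) / 2) * P2) $$ (i,j) = 0\<^sub>m s (s - ms) $$ (i,j)" using ij by simp
  qed auto
  have "EE * Q2 = (EE * Bmh * P2) * V" unfolding Q2_def by (simp add: assoc')
  also have "\<dots> = 0\<^sub>m s (s - ms)" unfolding EE_Bmh z by simp
  finally show ?thesis .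
qed

lemma EE_Q1: "EE * Q1 = Q1 * G"
proof (rule eq_matI)
  fix i j assume "i < dim_row (Q1 * G)" "j < dim_col (Q1 * G)"
  hence ij: "i < s" "j < ms" by auto
  have "(EE * Q1) $$ (i,j) = (\<Sum>k\<in>{0..<s}. b $ k / 2 * Q1 $$ (k,j))"
    using ij by (simp add: times_mat_def scalar_prod_def)
  also have "\<dots> = (\<Sum>k\<in>{0..<s}. Q1 $$ (k,j) * b $ k) / 2"
    by (subst sum_divide_distrib) (rule sum.cong, auto)
  also have "(\<Sum>k\<in>{0..<s}. Q1 $$ (k,j) * b $ k) = al $ j"
    using ij by (simp add: al_b mult_mat_vec_def scalar_prod_def)
  finally have 1: "(EE * Q1) $$ (i,j) = al $ j / 2" .
  have "(Q1 * G) $$ (i,j) = (\<Sum>l\<in>{0..<ms}. Q1 $$ (i,l) * (al $ l * al $ j / 2))"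
    using ij by (simp add: times_mat_def scalar_prod_def G_def)
  also have "\<dots> = (al $ j / 2) * (\<Sum>l\<in>{0..<ms}. Q1 $$ (i,l) * al $ l)"
    by (subst sum_distrib_left) (rule sum.cong, auto)
  also have "(\<Sum>l\<in>{0..<ms}. Q1 $$ (i,l) * al $ l) = (Q1 *\<^sub>v al) $ i"
    using ij by (simp add: mult_mat_vec_def scalar_prod_def)
  also have "\<dots> = 1" using ij by (simp add: Q1_al)
  finally show "(EE * Q1) $$ (i,j) = (Q1 * G) $$ (i,j)" using 1 by simp
qed auto

lemma AQ2: "A * Q2 = Q1 * D"
proof -
  have "A * Q2 = Ab * Q2 + EE * Q2" by (subst A_eq) (simp add: distr')
  then show ?thesis by (simp add: AbQ2 EE_Q2)
qed

lemma AQ1: "A * Q1 = - (Q2 * transpose_mat D) + Q1 * G"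
proof -
  have "A * Q1 = Ab * Q1 + EE * Q1" by (subst A_eq) (simp add: distr')
  then show ?thesis by (simp add: AbQ1 EE_Q1)
qed

end

lemma minv_props: assumes "invertible_mat X" "X \<in> carrier_mat n n"
  shows "minv X \<in> carrier_mat n n" "X * minv X = 1\<^sub>m n" "minv X * X = 1\<^sub>m n"
proof -
  obtain B where B: "inverts_mat X B" "inverts_mat B X" using assms(1) unfolding invertible_mat_def by blast
  have XB: "X * B = 1\<^sub>m n" using B(1) assms(2) unfolding inverts_mat_def by auto
  have BX: "B * X = 1\<^sub>m (dim_row B)" using B(2) unfolding inverts_mat_def by auto
  have "dim_col B = dim_col (X * B)" by simp
  also have "\<dots> = n" unfolding XB by simp
  finally have cB: "dim_col B = n" .
  have "dim_row B = dim_col (1\<^sub>m (dim_row B) :: real mat)" by simp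
  also have "\<dots> = dim_col (B * X)" unfolding BX ..
  also have "\<dots> = n" using assms(2) by simp
  finally have rB: "dim_row B = n" .
  have Bc: "B \<in> carrier_mat n n" using cB rB by auto
  have ex: "\<exists>N. N \<in> carrier_mat (dim_row X) (dim_row X) \<and> X * N = 1\<^sub>m (dim_row X) \<and> N * X = 1\<^sub>m (dim_row X)"
    using Bc XB BX assms(2) \<open>dim_row B = n\<close> by auto
  have "minv X \<in> carrier_mat (dim_row X) (dim_row X) \<and> X * minv X = 1\<^sub>m (dim_row X) \<and> minv X * X = 1\<^sub>m (dim_row X)"
    unfolding minv_def by (rule someI_ex[OF ex])
  then show "minv X \<in> carrier_mat n n" "X * minv X = 1\<^sub>m n" "minv X * X = 1\<^sub>m n" using assms(2) by auto
qed

lemma one_mult'[simp]: "dim_vec (v::real vec) = n \<Longrightarrow> 1\<^sub>m n *\<^sub>v v = v"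
  by (rule one_mult_mat_vec, rule carrier_vecI)

lemma smult_mat_vec': "dim_vec v = dim_col A \<Longrightarrow> (c \<cdot>\<^sub>m (A :: real mat)) *\<^sub>v v = c \<cdot>\<^sub>v (A *\<^sub>v v)"
  by (rule eq_vecI) (auto simp: scalar_prod_def sum_distrib_left mult.assoc)

lemma mult_vec_add': "dim_vec v = dim_col (A :: real mat) \<Longrightarrow> dim_vec w = dim_col A \<Longrightarrow> A *\<^sub>v (v + w) = A *\<^sub>v v + A *\<^sub>v w"
  by (rule mult_add_distrib_mat_vec[OF carrier_matI[OF refl refl] carrier_vecI carrier_vecI])

lemma mult_vec_smult': "dim_vec v = dim_col (A :: real mat) \<Longrightarrow> A *\<^sub>v (c \<cdot>\<^sub>v v) = c \<cdot>\<^sub>v (A *\<^sub>v v)"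
  by (rule mult_mat_vec[OF carrier_matI[OF refl refl] carrier_vecI])

lemma minus_vec': "dim_row (B :: real mat) = dim_row A \<Longrightarrow> dim_col B = dim_col A \<Longrightarrow> dim_vec v = dim_col A \<Longrightarrow> (A - B) *\<^sub>v v = A *\<^sub>v v - B *\<^sub>v v"
  by (rule minus_mult_distrib_mat_vec[OF carrier_matI[OF refl refl] carrier_matI carrier_vecI])

lemma block_identity:
  fixes d ms :: nat and J :: "real mat" and h :: real and \<sigma> :: "nat \<Rightarrow> real" and al :: "real vec" and Rb :: "nat \<Rightarrow> real vec"
  assumes J: "J \<in> carrier_mat d d" and Rb: "\<And>i. i < ms \<Longrightarrow> Rb i \<in> carrier_vec d"
  defines "N \<equiv> (\<lambda>i. 1\<^sub>m d + (h\<^sup>2 * (\<sigma> i)\<^sup>2) \<cdot>\<^sub>m (J * J))"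
  assumes N_inv: "\<forall>i<ms. invertible_mat (N i)"
  defines "M \<equiv> 1\<^sub>m d - J * ((h / 2) \<cdot>\<^sub>m msum d d (\<lambda>i. ((al $ i)\<^sup>2) \<cdot>\<^sub>m minv (N i)) {..<ms})"
  assumes M_inv: "invertible_mat M"
  defines "\<Delta>z \<equiv> minv M *\<^sub>v (h \<cdot>\<^sub>v (J *\<^sub>v vsum d (\<lambda>i. al $ i \<cdot>\<^sub>v (minv (N i) *\<^sub>v Rb i)) {..<ms}))"
  defines "W \<equiv> (\<lambda>i. minv (N i) *\<^sub>v (Rb i + (al $ i / 2) \<cdot>\<^sub>v \<Delta>z))"
  shows "\<And>i k. i < ms \<Longrightarrow> k < d \<Longrightarrow> W i $ k + h\<^sup>2 * (\<sigma> i)\<^sup>2 * ((J * J) *\<^sub>v W i) $ k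
     - h * (al $ i / 2) * (J *\<^sub>v vsum d (\<lambda>j. al $ j \<cdot>\<^sub>v W j) {..<ms}) $ k = Rb i $ k"
proof -
  define S where "S = msum d d (\<lambda>i. ((al $ i)\<^sup>2) \<cdot>\<^sub>m minv (N i)) {..<ms}"
  define c where "c = vsum d (\<lambda>i. al $ i \<cdot>\<^sub>v (minv (N i) *\<^sub>v Rb i)) {..<ms}"
  define z where "z = vsum d (\<lambda>j. al $ j \<cdot>\<^sub>v W j) {..<ms}"
  have Jd[simp]: "dim_row J = d" "dim_col J = d" using J by auto
  have Nc: "\<And>i. N i \<in> carrier_mat d d" unfolding N_def using J by auto
  have Mc: "M \<in> carrier_mat d d" unfolding M_def using J by (auto simp: msum_def)
  have Sd[simp]: "dim_row S = d" "dim_col S = d" by (simp_all add: S_def msum_def)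
  have mN: "\<And>i. i < ms \<Longrightarrow> minv (N i) \<in> carrier_mat d d" "\<And>i. i < ms \<Longrightarrow> N i * minv (N i) = 1\<^sub>m d"
    using minv_props[OF _ Nc] N_inv by auto
  have mNd: "\<And>i. i < ms \<Longrightarrow> dim_row (minv (N i)) = d" "\<And>i. i < ms \<Longrightarrow> dim_col (minv (N i)) = d"
    using mN(1) by auto
  have mM: "minv M \<in> carrier_mat d d" "M * minv M = 1\<^sub>m d" using minv_props[OF M_inv Mc] by auto
  have Rbd: "\<And>i. i < ms \<Longrightarrow> dim_vec (Rb i) = d" using Rb by auto
  have cd[simp]: "dim_vec c = d" "dim_vec z = d" by (simp_all add: c_def z_def vsum_def)
  have dzd[simp]: "dim_vec \<Delta>z = d" unfolding \<Delta>z_def using mM by auto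
  have Wd: "\<And>i. i < ms \<Longrightarrow> dim_vec (W i) = d" unfolding W_def using mN by auto
  have MDz: "M *\<^sub>v \<Delta>z = h \<cdot>\<^sub>v (J *\<^sub>v c)"
  proof -
    have dd: "dim_row M = d" "dim_col M = d" "dim_row (minv M) = d" "dim_col (minv M) = d" using mM Mc by auto
    have "M *\<^sub>v \<Delta>z = (M * minv M) *\<^sub>v (h \<cdot>\<^sub>v (J *\<^sub>v c))" unfolding \<Delta>z_def c_def
      using dd by (simp add: assocv')
    also have "\<dots> = h \<cdot>\<^sub>v (J *\<^sub>v c)" using mM by simp
    finally show ?thesis .
  qed
  have Mexp: "\<And>k. k < d \<Longrightarrow> (M *\<^sub>v \<Delta>z) $ k = \<Delta>z $ k - (h/2) * (J *\<^sub>v (S *\<^sub>v \<Delta>z)) $ k"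
  proof -
    fix k assume k: "k < d"
    have "M *\<^sub>v \<Delta>z = \<Delta>z - (h/2) \<cdot>\<^sub>v (J *\<^sub>v (S *\<^sub>v \<Delta>z))"
      unfolding M_def S_def[symmetric]
      by (simp add: minus_vec' smultr' assocv' smult_mat_vec')
    then show "(M *\<^sub>v \<Delta>z) $ k = \<Delta>z $ k - (h/2) * (J *\<^sub>v (S *\<^sub>v \<Delta>z)) $ k" using k by simp
  qed
  have Wexp: "\<And>j k. j < ms \<Longrightarrow> k < d \<Longrightarrow> W j $ k = (minv (N j) *\<^sub>v Rb j) $ k + (al $ j / 2) * (minv (N j) *\<^sub>v \<Delta>z) $ k"
  proof -
    fix j k assume jk: "j < ms" "k < d"
    have "W j = minv (N j) *\<^sub>v Rb j + (al $ j / 2) \<cdot>\<^sub>v (minv (N j) *\<^sub>v \<Delta>z)"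
      unfolding W_def using mN(1)[OF jk(1)] Rbd[OF jk(1)] by (simp add: mult_vec_add' mult_vec_smult')
    then show "W j $ k = (minv (N j) *\<^sub>v Rb j) $ k + (al $ j / 2) * (minv (N j) *\<^sub>v \<Delta>z) $ k"
      using jk mN(1)[OF jk(1)] by simp
  qed
  have Sexp: "\<And>k. k < d \<Longrightarrow> (S *\<^sub>v \<Delta>z) $ k = (\<Sum>j<ms. (al $ j)\<^sup>2 * (minv (N j) *\<^sub>v \<Delta>z) $ k)"
  proof -
    fix k assume k: "k < d"
    have "(S *\<^sub>v \<Delta>z) $ k = (\<Sum>l\<in>{0..<d}. (\<Sum>j<ms. (al $ j)\<^sup>2 * minv (N j) $$ (k,l)) * \<Delta>z $ l)"
      using k mN(1) apply (simp add: S_def msum_def scalar_prod_def)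
      by (rule sum.cong[OF refl], rule arg_cong2[where f="(*)"], rule sum.cong[OF refl]) (use mNd k in auto)
    also have "\<dots> = (\<Sum>j<ms. (al $ j)\<^sup>2 * (\<Sum>l\<in>{0..<d}. minv (N j) $$ (k,l) * \<Delta>z $ l))"
      by (simp add: sum_distrib_left sum_distrib_right mult.assoc) (rule sum.swap)
    also have "\<dots> = (\<Sum>j<ms. (al $ j)\<^sup>2 * (minv (N j) *\<^sub>v \<Delta>z) $ k)"
      using k mNd by (intro sum.cong refl) (simp add: scalar_prod_def)
    finally show "(S *\<^sub>v \<Delta>z) $ k = (\<Sum>j<ms. (al $ j)\<^sup>2 * (minv (N j) *\<^sub>v \<Delta>z) $ k)" .
  qed
  have zexp: "z = c + (1/2) \<cdot>\<^sub>v (S *\<^sub>v \<Delta>z)"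
  proof (rule eq_vecI)
    fix k assume "k < dim_vec (c + (1/2) \<cdot>\<^sub>v (S *\<^sub>v \<Delta>z))"
    hence k: "k < d" by simp
    have "z $ k = (\<Sum>j<ms. al $ j * W j $ k)" using k Wd by (simp add: z_def vsum_def)
    also have "\<dots> = (\<Sum>j<ms. al $ j * (minv (N j) *\<^sub>v Rb j) $ k) + (1/2) * (\<Sum>j<ms. (al $ j)\<^sup>2 * (minv (N j) *\<^sub>v \<Delta>z) $ k)"
      using k by (simp add: Wexp sum_distrib_left sum.distrib algebra_simps power2_eq_square)
    also have "(\<Sum>j<ms. al $ j * (minv (N j) *\<^sub>v Rb j) $ k) = c $ k"
      using k apply (simp add: c_def vsum_def)
      by (rule sum.cong[OF refl]) (use mNd k in auto)
    finally show "z $ k = (c + (1/2) \<cdot>\<^sub>v (S *\<^sub>v \<Delta>z)) $ k" using k Sexp[OF k] by (simp del: index_mult_mat_vec)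
  qed simp
  have dz: "\<And>k. k < d \<Longrightarrow> \<Delta>z $ k = h * (J *\<^sub>v z) $ k"
  proof -
    fix k assume k: "k < d"
    have Jz: "J *\<^sub>v z = J *\<^sub>v c + (1/2) \<cdot>\<^sub>v (J *\<^sub>v (S *\<^sub>v \<Delta>z))"
      unfolding zexp by (simp add: mult_vec_add' mult_vec_smult')
    have e1: "(J *\<^sub>v z) $ k = (J *\<^sub>v c) $ k + (1/2) * (J *\<^sub>v (S *\<^sub>v \<Delta>z)) $ k"
      using k by (simp only: Jz) (simp del: index_mult_mat_vec)
    have e2: "\<Delta>z $ k - (h/2) * (J *\<^sub>v (S *\<^sub>v \<Delta>z)) $ k = h * (J *\<^sub>v c) $ k"
      using Mexp[OF k] MDz k by (simp del: index_mult_mat_vec)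
    show "\<Delta>z $ k = h * (J *\<^sub>v z) $ k" unfolding e1 using e2 by (simp add: algebra_simps)
  qed
  fix i k assume ik: "i < ms" "k < d"
  have NW: "N i *\<^sub>v W i = Rb i + (al $ i / 2) \<cdot>\<^sub>v \<Delta>z"
  proof -
    have "N i *\<^sub>v W i = (N i * minv (N i)) *\<^sub>v (Rb i + (al $ i / 2) \<cdot>\<^sub>v \<Delta>z)"
      unfolding W_def using mN(1)[OF ik(1)] Nc[of i] Rbd[OF ik(1)] by (simp add: assocv')
    then show ?thesis using mN(2)[OF ik(1)] Rbd[OF ik(1)] by simp
  qed
  have NW2: "N i *\<^sub>v W i = W i + (h\<^sup>2 * (\<sigma> i)\<^sup>2) \<cdot>\<^sub>v ((J * J) *\<^sub>v W i)"
    unfolding N_def using Wd[OF ik(1)] by (simp add: distv' smult_mat_vec')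
  have "W i $ k + h\<^sup>2 * (\<sigma> i)\<^sup>2 * ((J * J) *\<^sub>v W i) $ k = Rb i $ k + (al $ i / 2) * \<Delta>z $ k"
  proof -
    have "(N i *\<^sub>v W i) $ k = W i $ k + h\<^sup>2 * (\<sigma> i)\<^sup>2 * ((J * J) *\<^sub>v W i) $ k"
      using ik Wd[OF ik(1)] by (simp only: NW2) (simp del: index_mult_mat_vec)
    moreover have "(N i *\<^sub>v W i) $ k = Rb i $ k + (al $ i / 2) * \<Delta>z $ k"
      using ik Rbd[OF ik(1)] by (simp only: NW) simp
    ultimately show ?thesis by simp
  qed
  then show "W i $ k + h\<^sup>2 * (\<sigma> i)\<^sup>2 * ((J * J) *\<^sub>v W i) $ k - h * (al $ i / 2) * (J *\<^sub>v z) $ k = Rb i $ k"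
    using dz[OF ik(2)] by (simp add: algebra_simps)
qed


lemma core_algebra:
  fixes Q1 Q2 A D G J WM rM Bm :: "real mat" and h :: real
  assumes dims: "dim_row Q1 = s" "dim_col Q1 = ms" "dim_row Q2 = s" "dim_col Q2 = ns"
    "dim_row A = s" "dim_col A = s" "dim_row D = ms" "dim_col D = ns" "dim_row G = ms" "dim_col G = ms"
    "dim_row J = d" "dim_col J = d" "dim_row WM = ms" "dim_col WM = d" "dim_row rM = s" "dim_col rM = d"
    "dim_row Bm = s" "dim_col Bm = s"
  and AQ1: "A * Q1 = - (Q2 * transpose_mat D) + Q1 * G"
  and AQ2: "A * Q2 = Q1 * D"
  and CP: "Q1 * (transpose_mat Q1 * Bm) + Q2 * (transpose_mat Q2 * Bm) = 1\<^sub>m s"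
  and BI: "WM + (h\<^sup>2) \<cdot>\<^sub>m (D * (transpose_mat D * (WM * (transpose_mat J * transpose_mat J)))) + (-h) \<cdot>\<^sub>m (G * (WM * transpose_mat J))
     = transpose_mat Q1 * (Bm * rM) + h \<cdot>\<^sub>m (D * (transpose_mat Q2 * (Bm * (rM * transpose_mat J))))"
  shows "(Q1 * WM + Q2 * ((-h) \<cdot>\<^sub>m (transpose_mat D * (WM * transpose_mat J)) + transpose_mat Q2 * (Bm * rM)))
     + (-h) \<cdot>\<^sub>m (A * ((Q1 * WM + Q2 * ((-h) \<cdot>\<^sub>m (transpose_mat D * (WM * transpose_mat J)) + transpose_mat Q2 * (Bm * rM))) * transpose_mat J))
     = rM"
proof -
  have AQ1': "\<And>X. dim_row X = ms \<Longrightarrow> A * (Q1 * X) = - (Q2 * (transpose_mat D * X)) + Q1 * (G * X)"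
  proof -
    fix X :: "real mat" assume X: "dim_row X = ms"
    have "A * (Q1 * X) = (A * Q1) * X" using dims X by (simp add: assoc')
    also have "\<dots> = - (Q2 * (transpose_mat D * X)) + Q1 * (G * X)" unfolding AQ1 using dims X by (simp add: distr' assoc')
    finally show "A * (Q1 * X) = - (Q2 * (transpose_mat D * X)) + Q1 * (G * X)" .
  qed
  have AQ2': "\<And>X. dim_row X = ns \<Longrightarrow> A * (Q2 * X) = Q1 * (D * X)"
  proof -
    fix X :: "real mat" assume X: "dim_row X = ns"
    have "A * (Q2 * X) = (A * Q2) * X" using dims X by (simp add: assoc')
    then show "A * (Q2 * X) = Q1 * (D * X)" unfolding AQ2 using dims X by (simp add: assoc')
  qed
  let ?L = "(Q1 * WM + Q2 * ((-h) \<cdot>\<^sub>m (transpose_mat D * (WM * transpose_mat J)) + transpose_mat Q2 * (Bm * rM)))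
     + (-h) \<cdot>\<^sub>m (A * ((Q1 * WM + Q2 * ((-h) \<cdot>\<^sub>m (transpose_mat D * (WM * transpose_mat J)) + transpose_mat Q2 * (Bm * rM))) * transpose_mat J))"
  have E3: "Q1 * (WM + (h\<^sup>2) \<cdot>\<^sub>m (D * (transpose_mat D * (WM * (transpose_mat J * transpose_mat J)))) + (-h) \<cdot>\<^sub>m (G * (WM * transpose_mat J)))
     = Q1 * (transpose_mat Q1 * (Bm * rM) + h \<cdot>\<^sub>m (D * (transpose_mat Q2 * (Bm * (rM * transpose_mat J)))))"
    using BI by simp
  have E4: "(Q1 * (transpose_mat Q1 * Bm) + Q2 * (transpose_mat Q2 * Bm)) * rM = rM"
    unfolding CP using dims by simp
  show "?L = rM"
  proof (rule eq_matI)
    fix i j assume "i < dim_row rM" "j < dim_col rM"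
    hence ij: "i < s" "j < d" using dims by auto
    have e3: "(Q1 * (WM + (h\<^sup>2) \<cdot>\<^sub>m (D * (transpose_mat D * (WM * (transpose_mat J * transpose_mat J)))) + (-h) \<cdot>\<^sub>m (G * (WM * transpose_mat J)))) $$ (i,j)
     = (Q1 * (transpose_mat Q1 * (Bm * rM) + h \<cdot>\<^sub>m (D * (transpose_mat Q2 * (Bm * (rM * transpose_mat J)))))) $$ (i,j)"
      using E3 by simp
    have e4: "((Q1 * (transpose_mat Q1 * Bm) + Q2 * (transpose_mat Q2 * Bm)) * rM) $$ (i,j) = rM $$ (i,j)"
      using E4 by simp
    note ss = distl' distr' assoc' smultl' smultr' AQ1' AQ2' dims
    have e3': "(Q1 * WM) $$ (i,j) + h\<^sup>2 * (Q1 * (D * (transpose_mat D * (WM * (transpose_mat J * transpose_mat J))))) $$ (i,j)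
        + (-h) * (Q1 * (G * (WM * transpose_mat J))) $$ (i,j)
      = (Q1 * (transpose_mat Q1 * (Bm * rM))) $$ (i,j) + h * (Q1 * (D * (transpose_mat Q2 * (Bm * (rM * transpose_mat J))))) $$ (i,j)"
      using e3 ij by (simp add: ss del: index_mult_mat(1))
    have e4': "(Q1 * (transpose_mat Q1 * (Bm * rM))) $$ (i,j) + (Q2 * (transpose_mat Q2 * (Bm * rM))) $$ (i,j) = rM $$ (i,j)"
      using e4 ij by (simp add: ss del: index_mult_mat(1))
    have "?L $$ (i,j) = (Q1 * WM) $$ (i,j) + ((-h) * (Q2 * (transpose_mat D * (WM * transpose_mat J))) $$ (i,j) + (Q2 * (transpose_mat Q2 * (Bm * rM))) $$ (i,j))
       + (-h) * ( - (Q2 * (transpose_mat D * (WM * transpose_mat J))) $$ (i,j) + (Q1 * (G * (WM * transpose_mat J))) $$ (i,j)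
         + ((-h) * (Q1 * (D * (transpose_mat D * (WM * (transpose_mat J * transpose_mat J))))) $$ (i,j)
            + (Q1 * (D * (transpose_mat Q2 * (Bm * (rM * transpose_mat J))))) $$ (i,j)))"
      using ij by (simp add: ss del: index_mult_mat(1))
    also have "\<dots> = rM $$ (i,j)" using e3' e4' by (simp add: algebra_simps power2_eq_square)
    finally show "?L $$ (i,j) = rM $$ (i,j)" .
  qed (use dims in auto)
qed

lemma DDt_diag:
  fixes D :: "real mat"
  assumes D: "D \<in> carrier_mat ms ns" and Dd: "\<forall>i<ms. \<forall>j<ns. i \<noteq> j \<longrightarrow> D $$ (i,j) = 0"
  shows "D * transpose_mat D = diagm ms (\<lambda>i. (if i < ns then D $$ (i,i) else 0)\<^sup>2)"
proof (rule eq_matI)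
  fix i j assume "i < dim_row (diagm ms (\<lambda>i. (if i < ns then D $$ (i,i) else 0)\<^sup>2))" "j < dim_col (diagm ms (\<lambda>i. (if i < ns then D $$ (i,i) else 0)\<^sup>2))"
  hence ij: "i < ms" "j < ms" by auto
  have "(D * transpose_mat D) $$ (i,j) = (\<Sum>l\<in>{0..<ns}. D $$ (i,l) * D $$ (j,l))"
    using ij D by (simp add: scalar_prod_def)
  also have "\<dots> = (\<Sum>l\<in>{0..<ns}. if l = i then (if i = j then D $$ (i,i) * D $$ (i,i) else 0) else 0)"
    using ij Dd by (intro sum.cong refl) auto
  also have "\<dots> = (if i < ns then (if i = j then D $$ (i,i) * D $$ (i,i) else 0) else 0)"
    by (simp add: sum.delta)
  also have "\<dots> = diagm ms (\<lambda>i. (if i < ns then D $$ (i,i) else 0)\<^sup>2) $$ (i,j)"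
    using ij by (auto simp: diagm_def power2_eq_square)
  finally show "(D * transpose_mat D) $$ (i,j) = diagm ms (\<lambda>i. (if i < ns then D $$ (i,i) else 0)\<^sup>2) $$ (i,j)" .
qed (use D in auto)

lemma BI_matrix:
  fixes D G J :: "real mat" and W Rb :: "nat \<Rightarrow> real vec" and al :: "real vec" and h :: real
  assumes D: "D \<in> carrier_mat ms ns" and Dd: "\<forall>i<ms. \<forall>j<ns. i \<noteq> j \<longrightarrow> D $$ (i,j) = 0"
    and J: "J \<in> carrier_mat d d" and Wc: "\<And>i. i < ms \<Longrightarrow> dim_vec (W i) = d"
    and G: "G = mat ms ms (\<lambda>(i,j). al $ i * al $ j / 2)"
    and pt: "\<And>i k. i < ms \<Longrightarrow> k < d \<Longrightarrow> W i $ k + h\<^sup>2 * ((\<lambda>i. if i < ns then D $$ (i,i) else 0) i)\<^sup>2 * ((J * J) *\<^sub>v W i) $ k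
     - h * (al $ i / 2) * (J *\<^sub>v vsum d (\<lambda>j. al $ j \<cdot>\<^sub>v W j) {..<ms}) $ k = Rb i $ k"
  shows "mat ms d (\<lambda>(j,k). W j $ k) + (h\<^sup>2) \<cdot>\<^sub>m (D * (transpose_mat D * (mat ms d (\<lambda>(j,k). W j $ k) * (transpose_mat J * transpose_mat J))))
     + (-h) \<cdot>\<^sub>m (G * (mat ms d (\<lambda>(j,k). W j $ k) * transpose_mat J)) = mat ms d (\<lambda>(i,k). Rb i $ k)"
proof (rule eq_matI)
  define WM where "WM = mat ms d (\<lambda>(j,k). W j $ k)"
  define \<sigma> where "\<sigma> = (\<lambda>i. if i < ns then D $$ (i,i) else (0::real))"
  have Jd[simp]: "dim_row J = d" "dim_col J = d" using J by auto
  have Ddim[simp]: "dim_row D = ms" "dim_col D = ns" using D by auto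
  fix i k assume "i < dim_row (mat ms d (\<lambda>(i,k). Rb i $ k))" "k < dim_col (mat ms d (\<lambda>(i,k). Rb i $ k))"
  hence ik: "i < ms" "k < d" by auto
  have T1: "(D * (transpose_mat D * (WM * (transpose_mat J * transpose_mat J)))) $$ (i,k) = (\<sigma> i)\<^sup>2 * ((J * J) *\<^sub>v W i) $ k"
  proof -
    have "D * (transpose_mat D * (WM * (transpose_mat J * transpose_mat J))) = (D * transpose_mat D) * (WM * (transpose_mat J * transpose_mat J))"
      by (simp add: assoc' WM_def)
    also have "\<dots> = diagm ms (\<lambda>i. (\<sigma> i)\<^sup>2) * (WM * (transpose_mat J * transpose_mat J))"
      unfolding DDt_diag[OF D Dd] \<sigma>_def ..
    finally have eqD: "D * (transpose_mat D * (WM * (transpose_mat J * transpose_mat J))) = diagm ms (\<lambda>i. (\<sigma> i)\<^sup>2) * (WM * (transpose_mat J * transpose_mat J))" .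
    have c: "WM * (transpose_mat J * transpose_mat J) \<in> carrier_mat ms d" by (rule carrier_matI) (simp_all add: WM_def)
    have 1: "(D * (transpose_mat D * (WM * (transpose_mat J * transpose_mat J)))) $$ (i,k) = (\<sigma> i)\<^sup>2 * (WM * (transpose_mat J * transpose_mat J)) $$ (i,k)"
      unfolding eqD by (rule diagm_mult_entry[OF c ik])
    have "(WM * (transpose_mat J * transpose_mat J)) $$ (i,k) = (\<Sum>l\<in>{0..<d}. W i $ l * (\<Sum>m\<in>{0..<d}. J $$ (m,l) * J $$ (k,m)))"
      using ik by (simp add: WM_def scalar_prod_def)
    also have "\<dots> = ((J * J) *\<^sub>v W i) $ k"
      using ik Wc[OF ik(1)] by (simp add: scalar_prod_def mult.commute mult.left_commute)
    finally show ?thesis using 1 by simp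
  qed
  have T2: "(G * (WM * transpose_mat J)) $$ (i,k) = (al $ i / 2) * (J *\<^sub>v vsum d (\<lambda>j. al $ j \<cdot>\<^sub>v W j) {..<ms}) $ k"
  proof -
    have "(G * (WM * transpose_mat J)) $$ (i,k) = (\<Sum>j\<in>{0..<ms}. al $ i * al $ j / 2 * (\<Sum>l\<in>{0..<d}. W j $ l * J $$ (k,l)))"
      using ik by (simp add: G WM_def scalar_prod_def)
    also have "\<dots> = (\<Sum>l\<in>{0..<d}. \<Sum>j\<in>{0..<ms}. (al $ i / 2) * (J $$ (k,l) * (al $ j * W j $ l)))"
      by (subst sum.swap) (simp add: sum_distrib_left mult.commute mult.left_commute)
    also have "\<dots> = (al $ i / 2) * (\<Sum>l\<in>{0..<d}. J $$ (k,l) * (\<Sum>j<ms. al $ j * W j $ l))"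
      by (simp add: sum_distrib_left atLeast0LessThan)
    also have "\<dots> = (al $ i / 2) * (J *\<^sub>v vsum d (\<lambda>j. al $ j \<cdot>\<^sub>v W j) {..<ms}) $ k"
    proof -
      have "\<And>l. l < d \<Longrightarrow> (\<Sum>j<ms. al $ j * W j $ l) = vsum d (\<lambda>j. al $ j \<cdot>\<^sub>v W j) {..<ms} $ l"
        unfolding vsum_def using Wc by (auto intro!: sum.cong)
      then show ?thesis using ik by (simp add: scalar_prod_def vsum_def)
    qed
    finally show ?thesis .
  qed
  have "(WM + (h\<^sup>2) \<cdot>\<^sub>m (D * (transpose_mat D * (WM * (transpose_mat J * transpose_mat J)))) + (-h) \<cdot>\<^sub>m (G * (WM * transpose_mat J))) $$ (i,k)
     = W i $ k + h\<^sup>2 * (D * (transpose_mat D * (WM * (transpose_mat J * transpose_mat J)))) $$ (i,k) + (-h) * (G * (WM * transpose_mat J)) $$ (i,k)"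
    using ik by (simp add: WM_def G del: index_mult_mat(1))
  also have "\<dots> = Rb i $ k" unfolding T1 T2 using pt[OF ik] unfolding \<sigma>_def by (simp add: algebra_simps)
  finally show "(mat ms d (\<lambda>(j,k). W j $ k) + (h\<^sup>2) \<cdot>\<^sub>m (D * (transpose_mat D * (mat ms d (\<lambda>(j,k). W j $ k) * (transpose_mat J * transpose_mat J))))
     + (-h) \<cdot>\<^sub>m (G * (mat ms d (\<lambda>(j,k). W j $ k) * transpose_mat J))) $$ (i,k) = mat ms d (\<lambda>(i,k). Rb i $ k) $$ (i,k)"
    using ik unfolding WM_def by simp
qed (use G J D in auto)



lemma stack_tov: "stack_vec m d W = tov m d (mat m d (\<lambda>(j,k). W j $ k))"
proof (rule eq_vecI)
  fix p assume "p < dim_vec (tov m d (mat m d (\<lambda>(j,k). W j $ k)))"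
  hence p: "p < m*d" by (simp add: tov_def)
  hence d: "d > 0" by (cases d) auto
  have "p div d < m" using p by (simp add: less_mult_imp_div_less)
  then show "stack_vec m d W $ p = tov m d (mat m d (\<lambda>(j,k). W j $ k)) $ p" using p d
    by (simp add: stack_vec_def tov_def)
qed (simp add: stack_vec_def tov_def)

lemma tom_dims[simp]: "dim_row (tom n d v) = n" "dim_col (tom n d v) = d" by (simp_all add: tom_def)
lemma tov_dim[simp]: "dim_vec (tov n d X) = n * d" by (simp add: tov_def)

lemma kron_dims[simp]: "dim_row (kron A B) = dim_row A * dim_row B" "dim_col (kron A B) = dim_col A * dim_col B" by (simp_all add: kron_def)

lemma tov_smult': "dim_row X = n \<Longrightarrow> dim_col X = d \<Longrightarrow> tov n d (a \<cdot>\<^sub>m X) = a \<cdot>\<^sub>v tov n d X"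
  by (rule tov_smult) (rule carrier_matI)

lemma tom_tov': "dim_row X = n \<Longrightarrow> dim_col X = d \<Longrightarrow> tom n d (tov n d X) = X"
  by (rule tom_tov) (rule carrier_matI)

lemma block_tom: "k < d \<Longrightarrow> block_vec d v i $ k = v $ (i*d+k)" by (simp add: block_vec_def)
lemma block_dim[simp]: "dim_vec (block_vec d v i) = d" by (simp add: block_vec_def)

lemma Rb_mat: assumes "R = tov m d X" "X \<in> carrier_mat m d"
  shows "mat m d (\<lambda>(i,k). block_vec d R i $ k) = X"
proof -
  have "mat m d (\<lambda>(i,k). block_vec d R i $ k) = tom m d R"
    by (rule eq_matI) (auto simp: tom_def block_vec_def)
  then show ?thesis using assms tom_tov by simp
qed

lemma tov_comb: assumes "X \<in> carrier_mat n d" "Y \<in> carrier_mat n d"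
  shows "tov n d X - c \<cdot>\<^sub>v tov n d Y = tov n d (X + (-c) \<cdot>\<^sub>m Y)"
proof (rule eq_vecI)
  fix p assume "p < dim_vec (tov n d (X + (-c) \<cdot>\<^sub>m Y))"
  hence p: "p < n*d" by (simp add: tov_def)
  hence d: "d > 0" by (cases d) auto
  have "p div d < n" using p by (simp add: less_mult_imp_div_less)
  then show "(tov n d X - c \<cdot>\<^sub>v tov n d Y) $ p = tov n d (X + (-c) \<cdot>\<^sub>m Y) $ p" using p d assms by (simp add: tov_def)
qed (simp add: tov_def)

lemma mainExist:
  fixes s d :: nat and A :: "real mat" and b :: "real vec"
    and U V D J :: "real mat" and h :: real and r :: "real vec"
  assumes s_pos: "s \<ge> 1"
    and A_dim: "A \<in> carrier_mat s s" and b_dim: "b \<in> carrier_vec s"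
    and b_pos: "\<forall>i<s. b $ i > 0"
    and sympl: "\<forall>i<s. \<forall>j<s. b $ i * A $$ (i,j) + b $ j * A $$ (j,i) - b $ i * b $ j = 0"
    and symm_b: "\<forall>i<s. b $ (s - 1 - i) = b $ i"
    and symm_A: "\<forall>i<s. \<forall>j<s. b $ j = A $$ (s - 1 - i, s - 1 - j) + A $$ (i,j)"
  defines "m \<equiv> (s + 1) div 2"
  defines "Bm \<equiv> diagm s (\<lambda>i. b $ i)"
    and "Bh \<equiv> diagm s (\<lambda>i. sqrt (b $ i))"
    and "Bmh \<equiv> diagm s (\<lambda>i. 1 / sqrt (b $ i))"
    and "e \<equiv> vec s (\<lambda>_. 1 :: real)"
    and "Abar \<equiv> mat s s (\<lambda>(i,j). A $$ (i,j) - b $ j / 2)"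
    and "P1 \<equiv> P1_mat s" and "P2 \<equiv> P2_mat s"
  defines "K \<equiv> transpose_mat P1 * Bh * Abar * Bmh * P2"
  assumes U_orth: "U \<in> carrier_mat m m" "transpose_mat U * U = 1\<^sub>m m"
    and V_orth: "V \<in> carrier_mat (s - m) (s - m)" "transpose_mat V * V = 1\<^sub>m (s - m)"
    and D_dim: "D \<in> carrier_mat m (s - m)"
    and D_diag: "\<forall>i<m. \<forall>j<s - m. i \<noteq> j \<longrightarrow> D $$ (i,j) = 0"
    and D_nonneg: "\<forall>i<s - m. D $$ (i,i) \<ge> 0"
    and svd: "K = U * D * transpose_mat V"
  defines "\<sigma> \<equiv> (\<lambda>i. if i < s - m then D $$ (i,i) else 0)"
    and "Q1 \<equiv> Bmh * P1 * U" and "Q2 \<equiv> Bmh * P2 * V"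
  defines "\<alpha> \<equiv> transpose_mat Q1 *\<^sub>v (Bm *\<^sub>v e)"
  assumes J_dim: "J \<in> carrier_mat d d" and r_dim: "r \<in> carrier_vec (s * d)"
  defines "N \<equiv> (\<lambda>i. 1\<^sub>m d + (h\<^sup>2 * (\<sigma> i)\<^sup>2) \<cdot>\<^sub>m (J * J))"
  assumes N_inv: "\<forall>i<m. invertible_mat (N i)"
  defines "M \<equiv> 1\<^sub>m d - J * ((h / 2) \<cdot>\<^sub>m msum d d (\<lambda>i. ((\<alpha> $ i)\<^sup>2) \<cdot>\<^sub>m minv (N i)) {..<m})"
  assumes M_inv: "invertible_mat M"
  defines "R \<equiv> kron (transpose_mat Q1 * Bm) (1\<^sub>m d) *\<^sub>v r
               + h \<cdot>\<^sub>v (kron (D * transpose_mat Q2 * Bm) J *\<^sub>v r)"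
  defines "Rb \<equiv> block_vec d R"
  defines "\<Delta>z \<equiv> minv M *\<^sub>v (h \<cdot>\<^sub>v (J *\<^sub>v vsum d (\<lambda>i. \<alpha> $ i \<cdot>\<^sub>v (minv (N i) *\<^sub>v Rb i)) {..<m}))"
  defines "W \<equiv> (\<lambda>i. minv (N i) *\<^sub>v (Rb i + (\<alpha> $ i / 2) \<cdot>\<^sub>v \<Delta>z))"
  defines "W' \<equiv> stack_vec m d W"
  defines "W'' \<equiv> (- h) \<cdot>\<^sub>v (kron (transpose_mat D) J *\<^sub>v W')
                 + kron (transpose_mat Q2 * Bm) (1\<^sub>m d) *\<^sub>v r"
  defines "\<Delta>Y \<equiv> kron Q1 (1\<^sub>m d) *\<^sub>v W' + kron Q2 (1\<^sub>m d) *\<^sub>v W''"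
  shows "\<Delta>Y \<in> carrier_vec (s * d) \<and> (kron (1\<^sub>m s) (1\<^sub>m d) - h \<cdot>\<^sub>m kron A J) *\<^sub>v \<Delta>Y = r"
proof -
  have ctx: "sctx s A b U V D"
    unfolding sctx_def using s_pos A_dim b_dim b_pos sympl symm_b symm_A U_orth V_orth D_dim svd
    unfolding m_def K_def P1_def P2_def Bh_def Abar_def Bmh_def by blast
  interpret S: sctx s A b U V D by (rule ctx)
  have Q1e: "Q1 = S.Q1" unfolding Q1_def S.Q1_def Bmh_def P1_def ..
  have Q2e: "Q2 = S.Q2" unfolding Q2_def S.Q2_def Bmh_def P2_def ..
  have ale: "\<alpha> = S.al" unfolding \<alpha>_def S.al_def Q1e Bm_def e_def ..
  have me: "m = (s+1) div 2" by (simp add: m_def)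
  have me2[simp]: "Suc s div 2 = m" by (simp add: m_def)
  have dms[simp]: "dim_row Q1 = s" "dim_col Q1 = m" "dim_row Q2 = s" "dim_col Q2 = s - m"
    "dim_row Bm = s" "dim_col Bm = s" "dim_row J = d" "dim_col J = d" "dim_row S.G = m" "dim_col S.G = m"
    "dim_row D = m" "dim_col D = s - m" "dim_row A = s" "dim_col A = s"
    using J_dim D_dim A_dim by (auto simp: Q1e Q2e Bm_def)
  define rM where "rM = tom s d r"
  have rMc: "rM \<in> carrier_mat s d" and rMd[simp]: "dim_row rM = s" "dim_col rM = d" by (auto simp: rM_def)
  have r_eq: "r = tov s d rM" unfolding rM_def using r_dim by (simp add: tov_tom)
  define RMx where "RMx = transpose_mat Q1 * (Bm * rM) + h \<cdot>\<^sub>m (D * (transpose_mat Q2 * (Bm * (rM * transpose_mat J))))"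
  have RMxc: "RMx \<in> carrier_mat m d" by (rule carrier_matI) (simp_all add: RMx_def)
  have R_eq: "R = tov m d RMx"
  proof -
    have 1: "kron (transpose_mat Q1 * Bm) (1\<^sub>m d) *\<^sub>v r = tov m d (transpose_mat Q1 * (Bm * rM))"
      using r_dim by (subst kron_vec[of _ m s]) (auto intro!: carrier_matI simp: rM_def[symmetric] assoc')
    have 2: "kron (D * transpose_mat Q2 * Bm) J *\<^sub>v r = tov m d (D * (transpose_mat Q2 * (Bm * (rM * transpose_mat J))))"
      using r_dim J_dim by (subst kron_vec[of _ m s]) (auto intro!: carrier_matI simp: rM_def[symmetric] assoc')
    show ?thesis unfolding R_def 1 2 RMx_def
      by (subst tov_add) (auto intro!: carrier_matI simp: tov_smult')
  qed
  define WM where "WM = mat m d (\<lambda>(j,k). W j $ k)"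
  have WMd[simp]: "dim_row WM = m" "dim_col WM = d" by (simp_all add: WM_def)
  have W'_eq: "W' = tov m d WM" unfolding W'_def WM_def by (rule stack_tov)
  define W2c where "W2c = (-h) \<cdot>\<^sub>m (transpose_mat D * (WM * transpose_mat J)) + transpose_mat Q2 * (Bm * rM)"
  have W2cd[simp]: "dim_row W2c = s - m" "dim_col W2c = d" by (simp_all add: W2c_def)
  have W''_eq: "W'' = tov (s - m) d W2c"
  proof -
    have 1: "kron (transpose_mat D) J *\<^sub>v W' = tov (s - m) d (transpose_mat D * (WM * transpose_mat J))"
      unfolding W'_eq using J_dim by (subst kron_vec[of _ "s - m" m]) (auto intro!: carrier_matI simp: tom_tov' assoc')
    have 2: "kron (transpose_mat Q2 * Bm) (1\<^sub>m d) *\<^sub>v r = tov (s - m) d (transpose_mat Q2 * (Bm * rM))"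
      using r_dim by (subst kron_vec[of _ "s - m" s]) (auto intro!: carrier_matI simp: rM_def[symmetric] assoc')
    show ?thesis unfolding W''_def 1 2 W2c_def
      by (subst tov_add) (auto intro!: carrier_matI simp: tov_smult')
  qed
  define YM where "YM = Q1 * WM + Q2 * W2c"
  have YMd[simp]: "dim_row YM = s" "dim_col YM = d" by (simp_all add: YM_def)
  have DY_eq: "\<Delta>Y = tov s d YM"
  proof -
    have 1: "kron Q1 (1\<^sub>m d) *\<^sub>v W' = tov s d (Q1 * WM)"
      unfolding W'_eq by (subst kron_vec[of _ s m]) (auto intro!: carrier_matI simp: tom_tov')
    have 2: "kron Q2 (1\<^sub>m d) *\<^sub>v W'' = tov s d (Q2 * W2c)"
      unfolding W''_eq by (subst kron_vec[of _ s "s - m"]) (auto intro!: carrier_matI simp: tom_tov')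
    show ?thesis unfolding \<Delta>Y_def 1 2 YM_def by (subst tov_add) (auto intro!: carrier_matI)
  qed
  have Rbc: "\<And>i. i < m \<Longrightarrow> Rb i \<in> carrier_vec d" unfolding Rb_def by (simp add: carrier_vecI)
  have pt: "\<And>i k. i < m \<Longrightarrow> k < d \<Longrightarrow> W i $ k + h\<^sup>2 * (\<sigma> i)\<^sup>2 * ((J * J) *\<^sub>v W i) $ k
     - h * (\<alpha> $ i / 2) * (J *\<^sub>v vsum d (\<lambda>j. \<alpha> $ j \<cdot>\<^sub>v W j) {..<m}) $ k = Rb i $ k"
    unfolding W_def \<Delta>z_def M_def N_def
    by (rule block_identity[OF J_dim Rbc N_inv[unfolded N_def] M_inv[unfolded M_def N_def]])
  have Wc: "\<And>i. i < m \<Longrightarrow> dim_vec (W i) = d"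
  proof -
    fix i assume i: "i < m"
    have "N i \<in> carrier_mat d d" unfolding N_def using J_dim by auto
    then have "minv (N i) \<in> carrier_mat d d" using minv_props N_inv i by blast
    then show "dim_vec (W i) = d" unfolding W_def by simp
  qed
  have BI0: "WM + (h\<^sup>2) \<cdot>\<^sub>m (D * (transpose_mat D * (WM * (transpose_mat J * transpose_mat J))))
     + (-h) \<cdot>\<^sub>m (S.G * (WM * transpose_mat J)) = mat m d (\<lambda>(i,k). Rb i $ k)"
    unfolding WM_def
    by (rule BI_matrix[OF D_dim D_diag J_dim Wc S.G_def[folded ale me]]) (assumption, fact pt[unfolded \<sigma>_def])
  have BI: "WM + (h\<^sup>2) \<cdot>\<^sub>m (D * (transpose_mat D * (WM * (transpose_mat J * transpose_mat J))))
     + (-h) \<cdot>\<^sub>m (S.G * (WM * transpose_mat J)) = transpose_mat Q1 * (Bm * rM) + h \<cdot>\<^sub>m (D * (transpose_mat Q2 * (Bm * (rM * transpose_mat J))))"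
    unfolding BI0 Rb_def using Rb_mat[OF R_eq RMxc] by (simp add: RMx_def)
  have core: "YM + (-h) \<cdot>\<^sub>m (A * (YM * transpose_mat J)) = rM"
    unfolding YM_def W2c_def
    by (rule core_algebra[where ms = m and ns = "s - m" and s = s and d = d])
       (use S.AQ1 S.AQ2 S.Q_completeness BI in \<open>simp_all add: Q1e Q2e Bm_def\<close>)
  have T1: "kron (1\<^sub>m s) (1\<^sub>m d) *\<^sub>v \<Delta>Y = tov s d YM"
    unfolding DY_eq by (subst kron_vec[of _ s s]) (auto simp: tom_tov')
  have T2: "kron A J *\<^sub>v \<Delta>Y = tov s d (A * (YM * transpose_mat J))"
    unfolding DY_eq using A_dim J_dim by (subst kron_vec[of _ s s]) (auto simp: tom_tov' assoc')
  have "(kron (1\<^sub>m s) (1\<^sub>m d) - h \<cdot>\<^sub>m kron A J) *\<^sub>v \<Delta>Y = kron (1\<^sub>m s) (1\<^sub>m d) *\<^sub>v \<Delta>Y - h \<cdot>\<^sub>v (kron A J *\<^sub>v \<Delta>Y)"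
    using A_dim J_dim by (simp add: minus_vec' smult_mat_vec' DY_eq)
  also have "\<dots> = tov s d (YM + (-h) \<cdot>\<^sub>m (A * (YM * transpose_mat J)))"
    unfolding T1 T2 by (rule tov_comb) (auto intro!: carrier_matI)
  also have "\<dots> = r" unfolding core r_eq ..
  finally show ?thesis using DY_eq by simp
qed


theorem mainTheorem2:
  fixes s d :: nat and A :: "real mat" and b :: "real vec"
    and U V D J :: "real mat" and h :: real and r :: "real vec"
  assumes s_pos: "s \<ge> 1"
    and A_dim: "A \<in> carrier_mat s s" and b_dim: "b \<in> carrier_vec s"
    and b_pos: "\<forall>i<s. b $ i > 0"
    and sympl: "\<forall>i<s. \<forall>j<s. b $ i * A $$ (i,j) + b $ j * A $$ (j,i) - b $ i * b $ j = 0"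
    and symm_b: "\<forall>i<s. b $ (s - 1 - i) = b $ i"
    and symm_A: "\<forall>i<s. \<forall>j<s. b $ j = A $$ (s - 1 - i, s - 1 - j) + A $$ (i,j)"
  defines "m \<equiv> (s + 1) div 2"
  defines "Bm \<equiv> diagm s (\<lambda>i. b $ i)"
    and "Bh \<equiv> diagm s (\<lambda>i. sqrt (b $ i))"
    and "Bmh \<equiv> diagm s (\<lambda>i. 1 / sqrt (b $ i))"
    and "e \<equiv> vec s (\<lambda>_. 1 :: real)"
    and "Abar \<equiv> mat s s (\<lambda>(i,j). A $$ (i,j) - b $ j / 2)"
    and "P1 \<equiv> P1_mat s" and "P2 \<equiv> P2_mat s"
  defines "K \<equiv> transpose_mat P1 * Bh * Abar * Bmh * P2"
  assumes U_orth: "U \<in> carrier_mat m m" "transpose_mat U * U = 1\<^sub>m m"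
    and V_orth: "V \<in> carrier_mat (s - m) (s - m)" "transpose_mat V * V = 1\<^sub>m (s - m)"
    and D_dim: "D \<in> carrier_mat m (s - m)"
    and D_diag: "\<forall>i<m. \<forall>j<s - m. i \<noteq> j \<longrightarrow> D $$ (i,j) = 0"
    and D_nonneg: "\<forall>i<s - m. D $$ (i,i) \<ge> 0"
    and svd: "K = U * D * transpose_mat V"
  defines "\<sigma> \<equiv> (\<lambda>i. if i < s - m then D $$ (i,i) else 0)"
    and "Q1 \<equiv> Bmh * P1 * U" and "Q2 \<equiv> Bmh * P2 * V"
  defines "\<alpha> \<equiv> transpose_mat Q1 *\<^sub>v (Bm *\<^sub>v e)"
  assumes J_dim: "J \<in> carrier_mat d d" and r_dim: "r \<in> carrier_vec (s * d)"
  defines "N \<equiv> (\<lambda>i. 1\<^sub>m d + (h\<^sup>2 * (\<sigma> i)\<^sup>2) \<cdot>\<^sub>m (J * J))"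
  assumes N_inv: "\<forall>i<m. invertible_mat (N i)"
  defines "M \<equiv> 1\<^sub>m d - J * ((h / 2) \<cdot>\<^sub>m msum d d (\<lambda>i. ((\<alpha> $ i)\<^sup>2) \<cdot>\<^sub>m minv (N i)) {..<m})"
  assumes M_inv: "invertible_mat M"
  defines "R \<equiv> kron (transpose_mat Q1 * Bm) (1\<^sub>m d) *\<^sub>v r
               + h \<cdot>\<^sub>v (kron (D * transpose_mat Q2 * Bm) J *\<^sub>v r)"
  defines "Rb \<equiv> block_vec d R"
  defines "\<Delta>z \<equiv> minv M *\<^sub>v (h \<cdot>\<^sub>v (J *\<^sub>v vsum d (\<lambda>i. \<alpha> $ i \<cdot>\<^sub>v (minv (N i) *\<^sub>v Rb i)) {..<m}))"
  defines "W \<equiv> (\<lambda>i. minv (N i) *\<^sub>v (Rb i + (\<alpha> $ i / 2) \<cdot>\<^sub>v \<Delta>z))"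
  defines "W' \<equiv> stack_vec m d W"
  defines "W'' \<equiv> (- h) \<cdot>\<^sub>v (kron (transpose_mat D) J *\<^sub>v W')
                 + kron (transpose_mat Q2 * Bm) (1\<^sub>m d) *\<^sub>v r"
  defines "\<Delta>Y \<equiv> kron Q1 (1\<^sub>m d) *\<^sub>v W' + kron Q2 (1\<^sub>m d) *\<^sub>v W''"
  shows "\<Delta>Y \<in> carrier_vec (s * d)
       \<and> (kron (1\<^sub>m s) (1\<^sub>m d) - h \<cdot>\<^sub>m kron A J) *\<^sub>v \<Delta>Y = r
       \<and> (\<forall>x \<in> carrier_vec (s * d). (kron (1\<^sub>m s) (1\<^sub>m d) - h \<cdot>\<^sub>m kron A J) *\<^sub>v x = r \<longrightarrow> x = \<Delta>Y)"
proof -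
  let ?T = "kron (1\<^sub>m s) (1\<^sub>m d) - h \<cdot>\<^sub>m kron A J"
  note defs = m_def Bm_def Bh_def Bmh_def e_def Abar_def P1_def P2_def K_def \<sigma>_def Q1_def Q2_def \<alpha>_def N_def M_def
  note G0 = s_pos A_dim b_dim b_pos sympl symm_b symm_A U_orth V_orth D_dim D_diag D_nonneg svd J_dim
  note G1 = G0[unfolded defs]
  note NM = N_inv[unfolded defs] M_inv[unfolded defs]
  have sol: "\<Delta>Y \<in> carrier_vec (s * d) \<and> ?T *\<^sub>v \<Delta>Y = r"
    unfolding \<Delta>Y_def W''_def W'_def W_def \<Delta>z_def Rb_def R_def defs
    by (rule mainExist[OF G1 r_dim NM])
  have surj: "\<And>r'. r' \<in> carrier_vec (s * d) \<Longrightarrow> \<exists>y. y \<in> carrier_vec (s * d) \<and> ?T *\<^sub>v y = r'"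
  proof -
    fix r' :: "real vec" assume r': "r' \<in> carrier_vec (s * d)"
    show "\<exists>y. y \<in> carrier_vec (s * d) \<and> ?T *\<^sub>v y = r'"
      using mainExist[where r = r', OF G1 r' NM] by blast
  qed
  have Tc: "?T \<in> carrier_mat (s * d) (s * d)" using A_dim J_dim by (auto simp: kron_def)
  define X where "X = mat (s * d) (s * d) (\<lambda>(i,j). (SOME y. y \<in> carrier_vec (s * d) \<and> ?T *\<^sub>v y = unit_vec (s * d) j) $ i)"
  have Xc: "X \<in> carrier_mat (s * d) (s * d)" by (simp add: X_def)
  have colX: "\<And>j. j < s * d \<Longrightarrow> col X j = (SOME y. y \<in> carrier_vec (s * d) \<and> ?T *\<^sub>v y = unit_vec (s * d) j)
     \<and> (SOME y. y \<in> carrier_vec (s * d) \<and> ?T *\<^sub>v y = unit_vec (s * d) j) \<in> carrier_vec (s * d)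
     \<and> ?T *\<^sub>v (SOME y. y \<in> carrier_vec (s * d) \<and> ?T *\<^sub>v y = unit_vec (s * d) j) = unit_vec (s * d) j"
  proof -
    fix j assume j: "j < s * d"
    have ex: "\<exists>y. y \<in> carrier_vec (s * d) \<and> ?T *\<^sub>v y = unit_vec (s * d) j" by (rule surj) simp
    have sp: "(SOME y. y \<in> carrier_vec (s * d) \<and> ?T *\<^sub>v y = unit_vec (s * d) j) \<in> carrier_vec (s * d)
      \<and> ?T *\<^sub>v (SOME y. y \<in> carrier_vec (s * d) \<and> ?T *\<^sub>v y = unit_vec (s * d) j) = unit_vec (s * d) j"
      by (rule someI_ex[OF ex])
    have "col X j = (SOME y. y \<in> carrier_vec (s * d) \<and> ?T *\<^sub>v y = unit_vec (s * d) j)"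
      using j sp by (intro eq_vecI) (auto simp: X_def)
    then show "?thesis j" using sp by simp
  qed
  have TX: "?T * X = 1\<^sub>m (s * d)"
  proof (rule eq_matI)
    fix i j assume ij: "i < dim_row (1\<^sub>m (s * d))" "j < dim_col (1\<^sub>m (s * d))"
    have dd: "dim_row ?T = s * d" "dim_col ?T = s * d" "dim_row X = s * d" "dim_col X = s * d" using Tc Xc by auto
    have "(?T * X) $$ (i,j) = (?T *\<^sub>v col X j) $ i" using ij dd by simp
    also have "\<dots> = unit_vec (s * d) j $ i" using colX[of j] ij by simp
    finally show "(?T * X) $$ (i,j) = 1\<^sub>m (s * d) $$ (i,j)" using ij by simp
  qed (use Tc Xc in auto)
  have XT: "X * ?T = 1\<^sub>m (s * d)" by (rule mat_mult_left_right_inverse[OF Tc Xc TX])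
  have uniq: "\<And>x. x \<in> carrier_vec (s * d) \<Longrightarrow> ?T *\<^sub>v x = r \<Longrightarrow> x = X *\<^sub>v r"
  proof -
    fix x :: "real vec" assume x: "x \<in> carrier_vec (s * d)" "?T *\<^sub>v x = r"
    have "x = (X * ?T) *\<^sub>v x" using XT x by simp
    also have "\<dots> = X *\<^sub>v (?T *\<^sub>v x)" using Xc Tc x by (simp add: assoc_mult_mat_vec)
    finally show "x = X *\<^sub>v r" using x by simp
  qed
  have DYe: "\<Delta>Y = X *\<^sub>v r" using uniq sol by blast
  show ?thesis using sol uniq DYe by auto
qed


end
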